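(* Let $\Lambda$ be a block and $\lambda\in\Lambda$. (i) The number of weights $\mu$ with $\mu\supset\lambda$ is $2^{\mathrm{def}(\lambda)}$. (ii) The number of weights $\mu$ with $\mu\subset\lambda$ is finite if and only if $\mathrm{def}(\Lambda)<\infty$. (iii) For each $j\in\mathbb Z$, the number of weights $\mu$ with $\mu\subset\lambda$ and $\deg(\underline\mu\lambda)=j$ is finite.
   Context: A number line carries vertices indexed by consecutive integers (finitely or infinitely many). A weight labels each vertex by $\circ,\times,\vee,\wedge$ such that outside a finite set no $\vee$ is left of an $\wedge$. $\lambda\sim\mu$ if $\mu$ is obtained from $\lambda$ by permuting $\vee$'s and $\wedge$'s; equivalence classes are blocks. A cup diagram consists of finitely many non-crossing cups joining pairs of vertices and rays down to infinity. $c\lambda$ is an oriented cup diagram if free vertices are $\circ/\times$, each cup has one $\vee$ and one $\wedge$ end, ray vertices are $\vee/\wedge$, and no two rays are labelled $\vee,\wedge$ in that order left to right; its degree is its number of clockwise cups (left end labelled $\wedge$). $\underline\lambda$ is the unique cup diagram with $\underline\lambda\lambda$ oriented of degree $0$. $\mu\subset\lambda$ (also written $\lambda\supset\mu$) means $\mu\sim\lambda$ and $\underline\mu\lambda$ is oriented. $\mathrm{def}(\lambda)$ is the number of cups of $\underline\lambda$, and $\mathrm{def}(\Lambda)=\sup_{\lambda\in\Lambda}\mathrm{def}(\lambda)\in\{0,1,2,\dots\}\cup\{\infty\}$. *)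

theory Defs
  imports Main "HOL-Library.Extended_Nat"
begin

text \<open>Labels of vertices: Circ = \<open>\<circ>\<close>, Cross = \<open>\<times>\<close>, Vee = \<open>\<or>\<close>, Wedge = \<open>\<and>\<close>.\<close>
datatype label = Circ | Cross | Vee | Wedge

definition number_line :: "int set \<Rightarrow> bool" where
  "number_line I \<longleftrightarrow> (\<forall>a b c. a \<in> I \<longrightarrow> c \<in> I \<longrightarrow> a \<le> b \<longrightarrow> b \<le> c \<longrightarrow> b \<in> I)"

definition weight :: "int set \<Rightarrow> (int \<Rightarrow> label) \<Rightarrow> bool" where
  "weight I lam \<longleftrightarrow> (\<exists>F. finite F \<and>
     (\<forall>i j. i \<in> I - F \<longrightarrow> j \<in> I - F \<longrightarrow> i < j \<longrightarrow> \<not> (lam i = Vee \<and> lam j = Wedge)))"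

definition wsim :: "int set \<Rightarrow> (int \<Rightarrow> label) \<Rightarrow> (int \<Rightarrow> label) \<Rightarrow> bool" where
  "wsim I lam mu \<longleftrightarrow> weight I lam \<and> weight I mu \<and>
     (\<exists>\<sigma>. bij \<sigma> \<and> finite {i. \<sigma> i \<noteq> i} \<and>
         (\<forall>i. \<sigma> i \<noteq> i \<longrightarrow> i \<in> I \<and> lam i \<in> {Vee, Wedge}) \<and>
         (\<forall>i. mu i = lam (\<sigma> i)))"

text \<open>A cup diagram: a finite set of cups (a,b) with a<b, and a set of ray vertices.\<close>
type_synonym cupdiag = "(int \<times> int) set \<times> int set"

definition cup_ends :: "(int \<times> int) set \<Rightarrow> int set" where
  "cup_ends C = fst ` C \<union> snd ` C"

definition cup_diagram :: "int set \<Rightarrow> cupdiag \<Rightarrow> bool" where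
  "cup_diagram I c \<longleftrightarrow> (let C = fst c; R = snd c in
     finite C \<and>
     (\<forall>(a,b)\<in>C. a \<in> I \<and> b \<in> I \<and> a < b) \<and>
     (\<forall>p\<in>C. \<forall>q\<in>C. p \<noteq> q \<longrightarrow> {fst p, snd p} \<inter> {fst q, snd q} = {}) \<and>
     (\<forall>(a,b)\<in>C. \<forall>(a',b')\<in>C. \<not> (a < a' \<and> a' < b \<and> b < b')) \<and>
     R \<subseteq> I \<and> R \<inter> cup_ends C = {} \<and>
     (\<forall>r\<in>R. \<forall>(a,b)\<in>C. \<not> (a < r \<and> r < b)))"

definition oriented :: "int set \<Rightarrow> cupdiag \<Rightarrow> (int \<Rightarrow> label) \<Rightarrow> bool" where
  "oriented I c lam \<longleftrightarrow> (let C = fst c; R = snd c in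
     (\<forall>i\<in>I. i \<notin> cup_ends C \<longrightarrow> i \<notin> R \<longrightarrow> lam i \<in> {Circ, Cross}) \<and>
     (\<forall>(a,b)\<in>C. (lam a = Vee \<and> lam b = Wedge) \<or> (lam a = Wedge \<and> lam b = Vee)) \<and>
     (\<forall>r\<in>R. lam r \<in> {Vee, Wedge}) \<and>
     (\<forall>r1\<in>R. \<forall>r2\<in>R. r1 < r2 \<longrightarrow> \<not> (lam r1 = Vee \<and> lam r2 = Wedge)))"

text \<open>Degree: number of clockwise cups (left end labelled Wedge).\<close>
definition cdeg :: "cupdiag \<Rightarrow> (int \<Rightarrow> label) \<Rightarrow> nat" where
  "cdeg c lam = card {(a,b) \<in> fst c. lam a = Wedge}"

definition under :: "int set \<Rightarrow> (int \<Rightarrow> label) \<Rightarrow> cupdiag" where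
  "under I lam = (THE c. cup_diagram I c \<and> oriented I c lam \<and> cdeg c lam = 0)"

definition wsub :: "int set \<Rightarrow> (int \<Rightarrow> label) \<Rightarrow> (int \<Rightarrow> label) \<Rightarrow> bool" where
  "wsub I mu lam \<longleftrightarrow> wsim I mu lam \<and> oriented I (under I mu) lam"

definition defect :: "int set \<Rightarrow> (int \<Rightarrow> label) \<Rightarrow> nat" where
  "defect I lam = card (fst (under I lam))"

definition block_defect :: "int set \<Rightarrow> (int \<Rightarrow> label) \<Rightarrow> enat" where
  "block_defect I lam = (SUP mu\<in>{mu. wsim I lam mu}. enat (defect I mu))"

end

theory Submission
  imports Defs
begin


definition stp :: "int set \<Rightarrow> (int \<Rightarrow> label) \<Rightarrow> int \<Rightarrow> int" where
  "stp I lam i = (if i \<in> I \<and> lam i = Vee then 1 else if i \<in> I \<and> lam i = Wedge then -1 else 0)"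

definition dd :: "int set \<Rightarrow> (int \<Rightarrow> label) \<Rightarrow> int \<Rightarrow> int \<Rightarrow> int" where
  "dd I lam x y = (\<Sum>i\<in>{x..<y}. stp I lam i)"

lemma dd_split: "x \<le> y \<Longrightarrow> y \<le> z \<Longrightarrow> dd I lam x z = dd I lam x y + dd I lam y z"
proof -
  assume a: "x \<le> y" "y \<le> z"
  have "{x..<z} = {x..<y} \<union> {y..<z}" using a by auto
  moreover have "{x..<y} \<inter> {y..<z} = {}" by auto
  ultimately show ?thesis unfolding dd_def by (simp add: sum.union_disjoint)
qed

lemma dd_self[simp]: "dd I lam x x = 0" unfolding dd_def by simp

lemma dd_one[simp]: "dd I lam x (x+1) = stp I lam x"
proof -
  have "{x..<x+1} = {x}" by auto
  thus ?thesis unfolding dd_def by simp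
qed

lemma dd_snoc: "x \<le> y \<Longrightarrow> dd I lam x (y+1) = dd I lam x y + stp I lam y"
  using dd_split[of x y "y+1" I lam] by simp

lemma dd_cons: "x < y \<Longrightarrow> dd I lam x y = stp I lam x + dd I lam (x+1) y"
  using dd_split[of x "x+1" y I lam] by simp

lemma stp_bounds: "stp I lam i \<le> 1" "stp I lam i \<ge> -1"
  unfolding stp_def by auto

definition Match :: "int set \<Rightarrow> (int \<Rightarrow> label) \<Rightarrow> int \<Rightarrow> int \<Rightarrow> bool" where
  "Match I lam a b \<longleftrightarrow> a < b \<and> dd I lam a (b+1) = 0 \<and> (\<forall>x. a < x \<and> x \<le> b \<longrightarrow> dd I lam a x > 0)"

lemma Match_labels:
  assumes "Match I lam a b"
  shows "a \<in> I" "lam a = Vee" "b \<in> I" "lam b = Wedge" "a < b"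
proof -
  have ab: "a < b" and z: "dd I lam a (b+1) = 0" and p: "\<And>x. a < x \<Longrightarrow> x \<le> b \<Longrightarrow> dd I lam a x > 0"
    using assms unfolding Match_def by auto
  have "dd I lam a (a+1) > 0" using p[of "a+1"] ab by simp
  hence s1: "stp I lam a > 0" by simp
  show "a \<in> I" "lam a = Vee" using s1 unfolding stp_def by (auto split: if_splits)
  have "dd I lam a b > 0" using p[of b] ab by simp
  moreover have "dd I lam a (b+1) = dd I lam a b + stp I lam b" using dd_snoc[of a b] ab by simp
  ultimately have "stp I lam b < 0" using z by simp
  thus "b \<in> I" "lam b = Wedge" unfolding stp_def by (auto split: if_splits)
  show "a < b" by fact
qed

lemma Match_unique_right_lt: "Match I lam a b \<Longrightarrow> Match I lam a b' \<Longrightarrow> b < b' \<Longrightarrow> False"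
proof -
  assume m: "Match I lam a b" "Match I lam a b'" and lt: "b < b'"
  have "\<forall>x. a < x \<and> x \<le> b' \<longrightarrow> dd I lam a x > 0" using m(2) unfolding Match_def by blast
  moreover have "a < b + 1" "b + 1 \<le> b'" using m(1) lt unfolding Match_def by auto
  ultimately have "dd I lam a (b+1) > 0" by blast
  thus False using m(1) unfolding Match_def by auto
qed

lemma Match_unique_right:
  assumes "Match I lam a b" "Match I lam a b'" shows "b = b'"
proof (rule ccontr)
  assume "b \<noteq> b'"
  hence "b < b' \<or> b' < b" by auto
  thus False using Match_unique_right_lt[OF assms] Match_unique_right_lt[OF assms(2,1)] by blast
qed

lemma Match_unique_left_lt: "Match I lam a b \<Longrightarrow> Match I lam a' b \<Longrightarrow> a < a' \<Longrightarrow> False"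
proof -
  assume m: "Match I lam a b" "Match I lam a' b" and lt: "a < a'"
  have le: "a' \<le> b" using m(2) unfolding Match_def by auto
  have "\<forall>x. a < x \<and> x \<le> b \<longrightarrow> dd I lam a x > 0" using m(1) unfolding Match_def by blast
  hence pos: "dd I lam a a' > 0" using lt le by blast
  have "dd I lam a (b+1) = dd I lam a a' + dd I lam a' (b+1)" using dd_split[of a a' "b+1" I lam] lt le by simp
  thus False using m pos unfolding Match_def by auto
qed

lemma Match_unique_left:
  assumes "Match I lam a b" "Match I lam a' b" shows "a = a'"
proof (rule ccontr)
  assume "a \<noteq> a'"
  hence "a < a' \<or> a' < a" by auto
  thus False using Match_unique_left_lt[OF assms] Match_unique_left_lt[OF assms(2,1)] by blast
qed

lemma Match_noncross: "Match I lam a b \<Longrightarrow> Match I lam a' b' \<Longrightarrow> a < a' \<Longrightarrow> a' < b \<Longrightarrow> b < b' \<Longrightarrow> False"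
proof -
  assume m: "Match I lam a b" "Match I lam a' b'" and o: "a < a'" "a' < b" "b < b'"
  have "\<forall>x. a < x \<and> x \<le> b \<longrightarrow> dd I lam a x > 0" using m(1) unfolding Match_def by blast
  hence pos: "dd I lam a a' > 0" using o by auto
  have "\<forall>x. a' < x \<and> x \<le> b' \<longrightarrow> dd I lam a' x > 0" using m(2) unfolding Match_def by blast
  hence pos2: "dd I lam a' (b+1) > 0" using o by auto
  have "dd I lam a (b+1) = dd I lam a a' + dd I lam a' (b+1)" using dd_split[of a a' "b+1" I lam] o by simp
  thus False using m pos pos2 unfolding Match_def by auto
qed

lemma right_partner:
  assumes s: "stp I lam i = 1" and y: "i < y" and d: "dd I lam i y \<le> 0"
  shows "\<exists>b. Match I lam i b \<and> b < y"
proof -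
  define S where "S = {y'. i < y' \<and> y' \<le> y \<and> dd I lam i y' \<le> 0}"
  have fS: "finite S" unfolding S_def by (rule finite_subset[of _ "{i..y}"]) auto
  have yS: "y \<in> S" using y d unfolding S_def by auto
  define y0 where "y0 = Min S"
  have y0S: "y0 \<in> S" using Min_in[OF fS] yS unfolding y0_def by blast
  have y0min: "\<And>z. z \<in> S \<Longrightarrow> y0 \<le> z" using fS unfolding y0_def by simp
  have "y0 \<noteq> i + 1" using y0S s unfolding S_def by auto
  hence gt: "y0 > i + 1" using y0S unfolding S_def by auto
  define b where "b = y0 - 1"
  have nb: "b \<notin> S" using y0min[of b] unfolding b_def by auto
  have posb: "dd I lam i b > 0" using nb gt y0S unfolding S_def b_def by auto
  have "dd I lam i y0 = dd I lam i b + stp I lam b" using dd_snoc[of i b I lam] gt unfolding b_def by simp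
  hence z: "dd I lam i (b+1) = 0" using posb y0S stp_bounds[of I lam b] unfolding S_def b_def by auto
  have "\<forall>x. i < x \<and> x \<le> b \<longrightarrow> dd I lam i x > 0"
  proof (intro allI impI)
    fix x assume "i < x \<and> x \<le> b"
    hence "x \<notin> S" using y0min[of x] unfolding b_def by auto
    thus "dd I lam i x > 0" using \<open>i < x \<and> x \<le> b\<close> y0S unfolding S_def b_def by auto
  qed
  hence "Match I lam i b" using z gt unfolding Match_def b_def by auto
  moreover have "b < y" using y0S unfolding S_def b_def by auto
  ultimately show ?thesis by blast
qed

lemma left_partner:
  assumes s: "stp I lam i = -1" and z: "z \<le> i" and d: "dd I lam z (i+1) \<ge> 0"
  shows "\<exists>a. Match I lam a i \<and> z \<le> a"
proof -
  define S where "S = {z'. z \<le> z' \<and> z' \<le> i \<and> dd I lam z' (i+1) \<ge> 0}"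
  have fS: "finite S" unfolding S_def by (rule finite_subset[of _ "{z..i}"]) auto
  have zS: "z \<in> S" using z d unfolding S_def by auto
  define a where "a = Max S"
  have aS: "a \<in> S" using Max_in[OF fS] zS unfolding a_def by blast
  have amax: "\<And>w. w \<in> S \<Longrightarrow> w \<le> a" using fS unfolding a_def by simp
  have "a \<noteq> i" using aS s unfolding S_def by auto
  hence lt: "a < i" using aS unfolding S_def by auto
  have "a + 1 \<notin> S" using amax[of "a+1"] by auto
  hence neg: "dd I lam (a+1) (i+1) < 0" using lt aS unfolding S_def by auto
  have "dd I lam a (i+1) = stp I lam a + dd I lam (a+1) (i+1)" using dd_cons[of a "i+1"] lt by simp
  hence z0: "dd I lam a (i+1) = 0" using neg aS stp_bounds[of I lam a] unfolding S_def by auto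
  have "\<forall>x. a < x \<and> x \<le> i \<longrightarrow> dd I lam a x > 0"
  proof (intro allI impI)
    fix x assume x: "a < x \<and> x \<le> i"
    hence "x \<notin> S" using amax[of x] by auto
    hence "dd I lam x (i+1) < 0" using x aS unfolding S_def by auto
    moreover have "dd I lam a (i+1) = dd I lam a x + dd I lam x (i+1)" using dd_split[of a x "i+1" I lam] x by simp
    ultimately show "dd I lam a x > 0" using z0 by simp
  qed
  hence "Match I lam a i" using z0 lt unfolding Match_def by auto
  thus ?thesis using aS unfolding S_def by auto
qed


lemma dd_card: "dd I lam x y = int (card {i\<in>{x..<y}. i \<in> I \<and> lam i = Vee}) - int (card {i\<in>{x..<y}. i \<in> I \<and> lam i = Wedge})"
proof -
  have "\<And>i. stp I lam i = of_bool (i \<in> I \<and> lam i = Vee) - of_bool (i \<in> I \<and> lam i = Wedge)"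
    unfolding stp_def by auto
  hence "dd I lam x y = (\<Sum>i\<in>{x..<y}. (of_bool (i \<in> I \<and> lam i = Vee) :: int)) - (\<Sum>i\<in>{x..<y}. (of_bool (i \<in> I \<and> lam i = Wedge)::int))"
    unfolding dd_def by (simp add: sum_subtractf)
  also have "\<dots> = int (card ({x..<y} \<inter> {i. i \<in> I \<and> lam i = Vee})) - int (card ({x..<y} \<inter> {i. i \<in> I \<and> lam i = Wedge}))"
    by simp
  also have "{x..<y} \<inter> {i. i \<in> I \<and> lam i = Vee} = {i\<in>{x..<y}. i \<in> I \<and> lam i = Vee}" by auto
  also have "{x..<y} \<inter> {i. i \<in> I \<and> lam i = Wedge} = {i\<in>{x..<y}. i \<in> I \<and> lam i = Wedge}" by auto
  finally show ?thesis .
qed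

definition PP :: "int set \<Rightarrow> (int \<Rightarrow> label) \<Rightarrow> int set" where
  "PP I lam = {i\<in>I. lam i = Vee \<or> lam i = Wedge}"

definition Mset :: "int set \<Rightarrow> (int \<Rightarrow> label) \<Rightarrow> (int \<times> int) set" where
  "Mset I lam = {(a,b). Match I lam a b}"

definition canon :: "int set \<Rightarrow> (int \<Rightarrow> label) \<Rightarrow> cupdiag" where
  "canon I lam = (Mset I lam, PP I lam - cup_ends (Mset I lam))"

lemma mem_ends_M: "i \<in> cup_ends (Mset I lam) \<longleftrightarrow> (\<exists>b. Match I lam i b) \<or> (\<exists>a. Match I lam a i)"
  unfolding cup_ends_def Mset_def by force

lemma Match_covered:
  assumes m: "Match I lam a b" and i: "i \<in> I" "lam i = Vee \<or> lam i = Wedge" and ai: "a < i" "i < b"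
  shows "i \<in> cup_ends (Mset I lam)"
proof -
  have posall: "\<forall>x. a < x \<and> x \<le> b \<longrightarrow> dd I lam a x > 0" and z: "dd I lam a (b+1) = 0"
    using m unfolding Match_def by auto
  show ?thesis
  proof (cases "lam i = Vee")
    case True
    hence s: "stp I lam i = 1" using i unfolding stp_def by auto
    have "dd I lam a (b+1) = dd I lam a i + dd I lam i (b+1)" using dd_split[of a i "b+1" I lam] ai by simp
    moreover have "dd I lam a i > 0" using posall ai by auto
    ultimately have "dd I lam i (b+1) \<le> 0" using z by simp
    then obtain b' where "Match I lam i b'" using right_partner[OF s, of "b+1"] ai by auto
    thus ?thesis unfolding mem_ends_M by blast
  next
    case False
    hence s: "stp I lam i = -1" using i unfolding stp_def by auto
    have "dd I lam a (i+1) > 0" using posall ai by auto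
    then obtain a' where "Match I lam a' i" using left_partner[OF s, of a] ai by auto
    thus ?thesis unfolding mem_ends_M by blast
  qed
qed

lemma rays_ordered_M:
  assumes r1: "r1 \<in> I" "lam r1 = Vee" "r1 \<notin> cup_ends (Mset I lam)"
    and r2: "r2 \<in> I" "lam r2 = Wedge" "r2 \<notin> cup_ends (Mset I lam)" and lt: "r1 < r2"
  shows False
proof (cases "dd I lam r1 (r2+1) \<le> 0")
  case True
  have s: "stp I lam r1 = 1" using r1 unfolding stp_def by auto
  obtain b where "Match I lam r1 b" using right_partner[OF s, of "r2+1"] True lt by auto
  thus False using r1 unfolding mem_ends_M by blast
next
  case False
  have s: "stp I lam r2 = -1" using r2 unfolding stp_def by auto
  obtain a where "Match I lam a r2" using left_partner[OF s, of r1] False lt by auto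
  thus False using r2 unfolding mem_ends_M by blast
qed

lemma subsingleton_finite: "(\<And>x y. x \<in> A \<Longrightarrow> y \<in> A \<Longrightarrow> x = y) \<Longrightarrow> finite A"
proof (cases "A = {}")
  case False
  then obtain x where "x \<in> A" by auto
  moreover assume "\<And>x y. x \<in> A \<Longrightarrow> y \<in> A \<Longrightarrow> x = y"
  ultimately have "A = {x}" by auto
  thus ?thesis by simp
qed simp

lemma weight_pair:
  assumes "weight I lam"
  obtains F where "finite F" "\<And>i j. i \<in> I \<Longrightarrow> j \<in> I \<Longrightarrow> i < j \<Longrightarrow> lam i = Vee \<Longrightarrow> lam j = Wedge \<Longrightarrow> i \<in> F \<or> j \<in> F"
  using assms unfolding weight_def by blast

lemma finite_Mset:
  assumes "weight I lam" shows "finite (Mset I lam)"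
proof -
  obtain F where F: "finite F" "\<And>i j. i \<in> I \<Longrightarrow> j \<in> I \<Longrightarrow> i < j \<Longrightarrow> lam i = Vee \<Longrightarrow> lam j = Wedge \<Longrightarrow> i \<in> F \<or> j \<in> F"
    using weight_pair[OF assms] by blast
  have f1: "finite {b. Match I lam a b}" for a by (rule subsingleton_finite) (auto intro: Match_unique_right)
  have f2: "finite {a. Match I lam a b}" for b by (rule subsingleton_finite) (auto intro: Match_unique_left)
  have "Mset I lam \<subseteq> (\<Union>a\<in>F. {a} \<times> {b. Match I lam a b}) \<union> (\<Union>b\<in>F. {a. Match I lam a b} \<times> {b})"
  proof
    fix p assume "p \<in> Mset I lam"
    then obtain a b where p: "p = (a,b)" "Match I lam a b" unfolding Mset_def by auto
    hence "a \<in> F \<or> b \<in> F" using F(2)[of a b] Match_labels[OF p(2)] by blast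
    thus "p \<in> (\<Union>a\<in>F. {a} \<times> {b. Match I lam a b}) \<union> (\<Union>b\<in>F. {a. Match I lam a b} \<times> {b})" using p by auto
  qed
  moreover have "finite ((\<Union>a\<in>F. {a} \<times> {b. Match I lam a b}) \<union> (\<Union>b\<in>F. {a. Match I lam a b} \<times> {b}))"
    using F(1) f1 f2 by auto
  ultimately show ?thesis by (rule finite_subset)
qed

definition valid :: "int set \<Rightarrow> cupdiag \<Rightarrow> (int \<Rightarrow> label) \<Rightarrow> bool" where
  "valid I c lam \<longleftrightarrow> cup_diagram I c \<and> oriented I c lam \<and> cdeg c lam = 0"

lemma valid_canon:
  assumes w: "weight I lam" shows "valid I (canon I lam) lam"
proof -
  let ?M = "Mset I lam"
  have fin: "finite ?M" by (rule finite_Mset[OF w])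
  have c1: "\<forall>(a,b)\<in>?M. a \<in> I \<and> b \<in> I \<and> a < b" unfolding Mset_def using Match_labels by blast
  have c2: "\<forall>p\<in>?M. \<forall>q\<in>?M. p \<noteq> q \<longrightarrow> {fst p, snd p} \<inter> {fst q, snd q} = {}"
  proof (intro ballI impI)
    fix p q assume p: "p \<in> ?M" and q: "q \<in> ?M" and ne: "p \<noteq> q"
    obtain a b where ab: "p = (a,b)" "Match I lam a b" using p unfolding Mset_def by auto
    obtain c d where cd: "q = (c,d)" "Match I lam c d" using q unfolding Mset_def by auto
    have "a \<noteq> c" using ab cd ne Match_unique_right by blast
    moreover have "b \<noteq> d" using ab cd ne Match_unique_left by blast
    moreover have "a \<noteq> d" using Match_labels(2)[OF ab(2)] Match_labels(4)[OF cd(2)] by auto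
    moreover have "b \<noteq> c" using Match_labels(4)[OF ab(2)] Match_labels(2)[OF cd(2)] by auto
    ultimately show "{fst p, snd p} \<inter> {fst q, snd q} = {}" using ab cd by auto
  qed
  have c3: "\<forall>(a,b)\<in>?M. \<forall>(a',b')\<in>?M. \<not> (a < a' \<and> a' < b \<and> b < b')"
    unfolding Mset_def using Match_noncross by blast
  have c4: "\<forall>r\<in>PP I lam - cup_ends ?M. \<forall>(a,b)\<in>?M. \<not> (a < r \<and> r < b)"
  proof (intro ballI)
    fix r p assume r: "r \<in> PP I lam - cup_ends ?M" and p: "p \<in> ?M"
    obtain a b where ab: "p = (a,b)" "Match I lam a b" using p unfolding Mset_def by auto
    show "case p of (a,b) \<Rightarrow> \<not> (a < r \<and> r < b)"
      using Match_covered[OF ab(2), of r] r ab(1) unfolding PP_def by auto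
  qed
  have c5: "PP I lam - cup_ends ?M \<subseteq> I" unfolding PP_def by auto
  have c6: "(PP I lam - cup_ends ?M) \<inter> cup_ends ?M = {}" by auto
  have cd: "cup_diagram I (canon I lam)"
    unfolding cup_diagram_def canon_def Let_def fst_conv snd_conv
    using fin c1 c2 c3 c4 c5 c6 by (intro conjI) assumption+
  have o1: "\<forall>i\<in>I. i \<notin> cup_ends ?M \<longrightarrow> i \<notin> PP I lam - cup_ends ?M \<longrightarrow> lam i \<in> {Circ, Cross}"
  proof (intro ballI impI)
    fix i assume "i \<in> I" "i \<notin> cup_ends ?M" "i \<notin> PP I lam - cup_ends ?M"
    hence "lam i \<noteq> Vee" "lam i \<noteq> Wedge" unfolding PP_def by auto
    thus "lam i \<in> {Circ, Cross}" by (cases "lam i") auto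
  qed
  have o2: "\<forall>(a,b)\<in>?M. (lam a = Vee \<and> lam b = Wedge) \<or> (lam a = Wedge \<and> lam b = Vee)"
    unfolding Mset_def using Match_labels by blast
  have o4: "\<forall>r1\<in>PP I lam - cup_ends ?M. \<forall>r2\<in>PP I lam - cup_ends ?M. r1 < r2 \<longrightarrow> \<not> (lam r1 = Vee \<and> lam r2 = Wedge)"
    unfolding PP_def using rays_ordered_M by blast
  have o3: "\<forall>r\<in>PP I lam - cup_ends ?M. lam r \<in> {Vee, Wedge}" unfolding PP_def by auto
  have ori: "oriented I (canon I lam) lam"
    unfolding oriented_def canon_def Let_def fst_conv snd_conv
    using o1 o2 o3 o4 by (intro conjI) assumption+
  have "\<And>a b. (a,b)\<in>?M \<Longrightarrow> lam a \<noteq> Wedge" using Match_labels unfolding Mset_def by fastforce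
  hence e: "{(a,b)\<in>?M. lam a = Wedge} = {}" by auto
  have "cdeg (canon I lam) lam = card {(a,b)\<in>?M. lam a = Wedge}" unfolding cdeg_def canon_def by simp
  hence "cdeg (canon I lam) lam = 0" by (simp only: e card.empty)
  thus ?thesis using cd ori unfolding valid_def by blast
qed


lemma mem_ends: "i \<in> cup_ends C \<longleftrightarrow> (\<exists>b. (i,b) \<in> C) \<or> (\<exists>a. (a,i) \<in> C)"
  unfolding cup_ends_def by force

lemma cd_fin: "cup_diagram I c \<Longrightarrow> finite (fst c)"
  unfolding cup_diagram_def Let_def by blast
lemma cd_in: "cup_diagram I c \<Longrightarrow> (a,b) \<in> fst c \<Longrightarrow> a \<in> I \<and> b \<in> I \<and> a < b"
  unfolding cup_diagram_def Let_def by blast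
lemma cd_disj: "cup_diagram I c \<Longrightarrow> p \<in> fst c \<Longrightarrow> q \<in> fst c \<Longrightarrow> p \<noteq> q \<Longrightarrow> {fst p, snd p} \<inter> {fst q, snd q} = {}"
  unfolding cup_diagram_def Let_def by blast
lemma cd_nc: "cup_diagram I c \<Longrightarrow> (a,b) \<in> fst c \<Longrightarrow> (a',b') \<in> fst c \<Longrightarrow> a < a' \<Longrightarrow> a' < b \<Longrightarrow> b < b' \<Longrightarrow> False"
  unfolding cup_diagram_def Let_def by blast
lemma cd_RI: "cup_diagram I c \<Longrightarrow> snd c \<subseteq> I"
  unfolding cup_diagram_def Let_def by blast
lemma cd_Rends: "cup_diagram I c \<Longrightarrow> r \<in> snd c \<Longrightarrow> r \<notin> cup_ends (fst c)"
  unfolding cup_diagram_def Let_def by blast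
lemma cd_Rin: "cup_diagram I c \<Longrightarrow> r \<in> snd c \<Longrightarrow> (a,b) \<in> fst c \<Longrightarrow> a < r \<Longrightarrow> r < b \<Longrightarrow> False"
  unfolding cup_diagram_def Let_def by blast

lemma cd_disj2: "cup_diagram I c \<Longrightarrow> (a,b) \<in> fst c \<Longrightarrow> (a',b') \<in> fst c \<Longrightarrow> (a = a' \<or> a = b' \<or> b = a' \<or> b = b') \<Longrightarrow> a = a' \<and> b = b'"
  using cd_disj[of I c "(a,b)" "(a',b')"] by auto

lemma or_free: "oriented I c lam \<Longrightarrow> i \<in> I \<Longrightarrow> i \<notin> cup_ends (fst c) \<Longrightarrow> i \<notin> snd c \<Longrightarrow> lam i \<in> {Circ, Cross}"
  unfolding oriented_def Let_def by blast
lemma or_cup: "oriented I c lam \<Longrightarrow> (a,b) \<in> fst c \<Longrightarrow> (lam a = Vee \<and> lam b = Wedge) \<or> (lam a = Wedge \<and> lam b = Vee)"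
  unfolding oriented_def Let_def by blast
lemma or_ray: "oriented I c lam \<Longrightarrow> r \<in> snd c \<Longrightarrow> lam r = Vee \<or> lam r = Wedge"
  unfolding oriented_def Let_def by blast
lemma or_ord: "oriented I c lam \<Longrightarrow> r1 \<in> snd c \<Longrightarrow> r2 \<in> snd c \<Longrightarrow> r1 < r2 \<Longrightarrow> lam r1 = Vee \<Longrightarrow> lam r2 = Wedge \<Longrightarrow> False"
  unfolding oriented_def Let_def by blast

lemma deg0:
  assumes "cup_diagram I c" "oriented I c lam" "cdeg c lam = 0" "(a,b) \<in> fst c"
  shows "lam a = Vee \<and> lam b = Wedge"
proof -
  have "finite {(a,b) \<in> fst c. lam a = Wedge}"
    using cd_fin[OF assms(1)] by (rule finite_subset[rotated]) auto
  hence "{(a,b) \<in> fst c. lam a = Wedge} = {}" using assms(3) unfolding cdeg_def by simp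
  hence "lam a \<noteq> Wedge" using assms(4) by auto
  thus ?thesis using or_cup[OF assms(2,4)] by auto
qed

lemma valid_R:
  assumes "valid I c lam" shows "snd c = PP I lam - cup_ends (fst c)"
proof -
  have cd: "cup_diagram I c" and o: "oriented I c lam" using assms unfolding valid_def by auto
  show ?thesis
  proof
    show "snd c \<subseteq> PP I lam - cup_ends (fst c)"
      using cd_RI[OF cd] cd_Rends[OF cd] or_ray[OF o] unfolding PP_def by blast
    show "PP I lam - cup_ends (fst c) \<subseteq> snd c"
    proof
      fix i assume i: "i \<in> PP I lam - cup_ends (fst c)"
      show "i \<in> snd c"
      proof (rule ccontr)
        assume "i \<notin> snd c"
        hence "lam i \<in> {Circ, Cross}" using or_free[OF o, of i] i unfolding PP_def by auto
        thus False using i unfolding PP_def by auto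
      qed
    qed
  qed
qed

lemma valid_sub_M:
  assumes v: "valid I c lam" and ab: "(a,b) \<in> fst c"
  shows "Match I lam a b"
proof -
  have cd: "cup_diagram I c" and o: "oriented I c lam" and d0: "cdeg c lam = 0"
    using v unfolding valid_def by auto
  have abI: "a \<in> I" "b \<in> I" "a < b" using cd_in[OF cd ab] by auto
  have lab: "lam a = Vee" "lam b = Wedge" using deg0[OF cd o d0 ab] by auto
  have interior: "i \<in> cup_ends (fst c)" if "i \<in> I" "lam i = Vee \<or> lam i = Wedge" "a < i" "i < b" for i
  proof -
    have "i \<notin> snd c" using cd_Rin[OF cd _ ab] that by blast
    thus ?thesis using valid_R[OF v] that unfolding PP_def by auto
  qed
  have Wp: "\<exists>c'. (c',i) \<in> fst c \<and> a < c' \<and> c' < i" if "i \<in> I" "lam i = Wedge" "a < i" "i < b" for i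
  proof -
    have "i \<in> cup_ends (fst c)" using interior[of i] that by auto
    then consider e where "(i,e) \<in> fst c" | c' where "(c',i) \<in> fst c" unfolding mem_ends by blast
    thus ?thesis
    proof cases
      case 1 thus ?thesis using deg0[OF cd o d0 1] that by auto
    next
      case (2 c')
      have "c' < i" using cd_in[OF cd 2] by auto
      moreover have "c' \<noteq> a" using cd_disj2[OF cd ab 2] that by auto
      moreover have "\<not> c' < a" using cd_nc[OF cd 2 ab] that by auto
      ultimately show ?thesis using 2 by auto
    qed
  qed
  have Vp: "\<exists>e. (i,e) \<in> fst c \<and> i < e \<and> e < b" if "i \<in> I" "lam i = Vee" "a < i" "i < b" for i
  proof -
    have "i \<in> cup_ends (fst c)" using interior[of i] that by auto
    then consider e where "(i,e) \<in> fst c" | c' where "(c',i) \<in> fst c" unfolding mem_ends by blast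
    thus ?thesis
    proof cases
      case (1 e)
      have "i < e" using cd_in[OF cd 1] by auto
      moreover have "e \<noteq> b" using cd_disj2[OF cd ab 1] that by auto
      moreover have "\<not> b < e" using cd_nc[OF cd ab 1] that by auto
      ultimately show ?thesis using 1 by auto
    next
      case (2 c') thus ?thesis using deg0[OF cd o d0 2] that by auto
    qed
  qed
  let ?V = "\<lambda>x. {i\<in>{a+1..<x}. i \<in> I \<and> lam i = Vee}"
  let ?W = "\<lambda>x. {i\<in>{a+1..<x}. i \<in> I \<and> lam i = Wedge}"
  have cnt1: "card (?W x) \<le> card (?V x)" if x: "a < x" "x \<le> b" for x
  proof -
    have "\<forall>i\<in>?W x. \<exists>c'. (c',i) \<in> fst c \<and> a < c' \<and> c' < i" using Wp x by auto
    from bchoice[OF this] obtain f where f: "\<forall>i\<in>?W x. (f i,i) \<in> fst c \<and> a < f i \<and> f i < i" by blast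
    have "inj_on f (?W x)"
    proof (rule inj_onI)
      fix i j assume ij: "i \<in> ?W x" "j \<in> ?W x" "f i = f j"
      have "(f i, i) \<in> fst c" "(f j, j) \<in> fst c" using f ij(1,2) by auto
      from cd_disj2[OF cd this] show "i = j" using ij(3) by blast
    qed
    moreover have "f ` ?W x \<subseteq> ?V x"
    proof
      fix y assume "y \<in> f ` ?W x"
      then obtain i where i: "i \<in> ?W x" "y = f i" by auto
      have "y \<in> I" using cd_in[OF cd, of y i] f i by auto
      moreover have "lam y = Vee" using deg0[OF cd o d0, of y i] f i by auto
      ultimately show "y \<in> ?V x" using f i by auto
    qed
    moreover have "finite (?V x)" by (rule finite_subset[of _ "{a+1..<x}"]) auto
    ultimately show ?thesis by (rule card_inj_on_le)
  qed
  have cnt2: "card (?V b) \<le> card (?W b)"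
  proof -
    have "\<forall>i\<in>?V b. \<exists>e. (i,e) \<in> fst c \<and> i < e \<and> e < b" using Vp by auto
    from bchoice[OF this] obtain f where f: "\<forall>i\<in>?V b. (i, f i) \<in> fst c \<and> i < f i \<and> f i < b" by blast
    have "inj_on f (?V b)"
    proof (rule inj_onI)
      fix i j assume ij: "i \<in> ?V b" "j \<in> ?V b" "f i = f j"
      have "(i, f i) \<in> fst c" "(j, f j) \<in> fst c" using f ij(1,2) by auto
      from cd_disj2[OF cd this] show "i = j" using ij(3) by blast
    qed
    moreover have "f ` ?V b \<subseteq> ?W b"
    proof
      fix y assume "y \<in> f ` ?V b"
      then obtain i where i: "i \<in> ?V b" "y = f i" by auto
      have "y \<in> I" using cd_in[OF cd, of i y] f i by auto
      moreover have "lam y = Wedge" using deg0[OF cd o d0, of i y] f i by auto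
      ultimately show "y \<in> ?W b" using f i by auto
    qed
    moreover have "finite (?W b)" by (rule finite_subset[of _ "{a+1..<b}"]) auto
    ultimately show ?thesis by (rule card_inj_on_le)
  qed
  have sa: "stp I lam a = 1" using abI lab unfolding stp_def by auto
  have sb: "stp I lam b = -1" using abI lab unfolding stp_def by auto
  have pos: "\<forall>x. a < x \<and> x \<le> b \<longrightarrow> dd I lam a x > 0"
  proof (intro allI impI)
    fix x assume x: "a < x \<and> x \<le> b"
    have "dd I lam a x = stp I lam a + dd I lam (a+1) x" using dd_cons[of a x] x by simp
    also have "dd I lam (a+1) x = int (card (?V x)) - int (card (?W x))" by (rule dd_card)
    finally show "dd I lam a x > 0" using cnt1[of x] x sa by simp
  qed
  have "dd I lam a (b+1) = dd I lam a b + stp I lam b" using dd_snoc[of a b] abI by simp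
  also have "dd I lam a b = stp I lam a + dd I lam (a+1) b" using dd_cons[of a b] abI by simp
  also have "dd I lam (a+1) b = int (card (?V b)) - int (card (?W b))" by (rule dd_card)
  finally have "dd I lam a (b+1) = 0" using cnt1[of b] cnt2 abI sa sb by simp
  thus ?thesis using pos abI unfolding Match_def by auto
qed

lemma M_sub_valid:
  assumes v: "valid I c lam" and m: "Match I lam a b"
  shows "(a,b) \<in> fst c"
proof -
  have cd: "cup_diagram I c" and o: "oriented I c lam" and d0: "cdeg c lam = 0"
    using v unfolding valid_def by auto
  note ml = Match_labels[OF m]
  have R: "snd c = PP I lam - cup_ends (fst c)" by (rule valid_R[OF v])
  show ?thesis
  proof (cases "a \<in> cup_ends (fst c)")
    case True
    then consider e where "(a,e) \<in> fst c" | c' where "(c',a) \<in> fst c" unfolding mem_ends by blast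
    thus ?thesis
    proof cases
      case (1 e)
      have "Match I lam a e" by (rule valid_sub_M[OF v 1])
      hence "e = b" using Match_unique_right m by blast
      thus ?thesis using 1 by simp
    next
      case (2 c') thus ?thesis using deg0[OF cd o d0 2] ml by auto
    qed
  next
    case False
    hence aR: "a \<in> snd c" using R ml unfolding PP_def by auto
    show ?thesis
    proof (cases "b \<in> cup_ends (fst c)")
      case True
      then consider e where "(b,e) \<in> fst c" | c' where "(c',b) \<in> fst c" unfolding mem_ends by blast
      thus ?thesis
      proof cases
        case (1 e) thus ?thesis using deg0[OF cd o d0 1] ml by auto
      next
        case (2 c')
        have "Match I lam c' b" by (rule valid_sub_M[OF v 2])
        hence "c' = a" using Match_unique_left m by blast
        thus ?thesis using 2 by simp
      qed
    next
      case False
      hence bR: "b \<in> snd c" using R ml unfolding PP_def by auto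
      show ?thesis using or_ord[OF o aR bR] ml by auto
    qed
  qed
qed

lemma valid_unique:
  assumes v: "valid I c lam" shows "c = canon I lam"
proof -
  have "fst c = Mset I lam"
    using valid_sub_M[OF v] M_sub_valid[OF v] unfolding Mset_def by auto
  moreover have "snd c = PP I lam - cup_ends (Mset I lam)" using valid_R[OF v] calculation by simp
  ultimately show ?thesis unfolding canon_def by (simp add: prod_eq_iff)
qed

lemma under_canon:
  assumes w: "weight I lam" shows "under I lam = canon I lam"
  unfolding under_def
proof (rule the_equality)
  show "cup_diagram I (canon I lam) \<and> oriented I (canon I lam) lam \<and> cdeg (canon I lam) lam = 0"
    using valid_canon[OF w] unfolding valid_def by blast
  fix c assume "cup_diagram I c \<and> oriented I c lam \<and> cdeg c lam = 0"
  thus "c = canon I lam" using valid_unique unfolding valid_def by blast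
qed

lemma valid_under: "weight I lam \<Longrightarrow> valid I (under I lam) lam"
  using under_canon valid_canon by simp

lemma under_eq: "weight I lam \<Longrightarrow> valid I c lam \<Longrightarrow> under I lam = c"
  using under_canon valid_unique by simp


lemma wsim_E:
  assumes "wsim I lam mu"
  obtains \<sigma> where "bij \<sigma>" "finite {i. \<sigma> i \<noteq> i}" "\<And>i. \<sigma> i \<noteq> i \<Longrightarrow> i \<in> I \<and> lam i \<in> {Vee, Wedge}"
    "\<And>i. mu i = lam (\<sigma> i)"
  using assms unfolding wsim_def by blast

lemma wsim_weight: "wsim I lam mu \<Longrightarrow> weight I lam" "wsim I lam mu \<Longrightarrow> weight I mu"
  unfolding wsim_def by auto

lemma wsim_refl: "weight I lam \<Longrightarrow> wsim I lam lam"
  unfolding wsim_def by (rule conjI, simp, rule conjI, simp, rule exI[of _ id]) auto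

lemma moved_closed:
  assumes "bij \<sigma>" "\<sigma> i \<noteq> i" shows "\<sigma> (\<sigma> i) \<noteq> \<sigma> i"
proof
  assume "\<sigma> (\<sigma> i) = \<sigma> i"
  hence "\<sigma> i = i" using injD[OF bij_is_inj[OF assms(1)]] by blast
  thus False using assms(2) by simp
qed

lemma wsim_intro:
  assumes "weight I lam" "weight I mu" "bij \<sigma>" "finite {i. \<sigma> i \<noteq> i}"
    "\<And>i. \<sigma> i \<noteq> i \<Longrightarrow> i \<in> I \<and> lam i \<in> {Vee, Wedge}" "\<And>i. mu i = lam (\<sigma> i)"
  shows "wsim I lam mu"
  unfolding wsim_def
  apply (intro conjI assms(1,2))
  apply (rule exI[of _ \<sigma>])
  using assms(3-6) by blast

lemma wsim_sym:
  assumes "wsim I lam mu" shows "wsim I mu lam"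
proof -
  obtain \<sigma> where s: "bij \<sigma>" "finite {i. \<sigma> i \<noteq> i}" "\<And>i. \<sigma> i \<noteq> i \<Longrightarrow> i \<in> I \<and> lam i \<in> {Vee, Wedge}"
    "\<And>i. mu i = lam (\<sigma> i)" using wsim_E[OF assms] by blast
  let ?t = "inv \<sigma>"
  have bt: "bij ?t" using s(1) by (simp add: bij_imp_bij_inv)
  have st: "\<sigma> (?t i) = i" for i by (rule surj_f_inv_f[OF bij_is_surj[OF s(1)]])
  have mv: "?t i \<noteq> i \<Longrightarrow> \<sigma> i \<noteq> i" for i
  proof
    assume "?t i \<noteq> i" "\<sigma> i = i"
    moreover have "?t i = i" using inv_f_eq[OF bij_is_inj[OF s(1)] \<open>\<sigma> i = i\<close>] .
    ultimately show False by simp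
  qed
  have "{i. ?t i \<noteq> i} \<subseteq> {i. \<sigma> i \<noteq> i}" using mv by auto
  hence ft: "finite {i. ?t i \<noteq> i}" using s(2) finite_subset by blast
  have c: "i \<in> I \<and> mu i \<in> {Vee, Wedge}" if "?t i \<noteq> i" for i
  proof -
    have m: "\<sigma> i \<noteq> i" by (rule mv[OF that])
    have "\<sigma> (\<sigma> i) \<noteq> \<sigma> i" by (rule moved_closed[OF s(1) m])
    hence "\<sigma> i \<in> I \<and> lam (\<sigma> i) \<in> {Vee, Wedge}" by (rule s(3))
    moreover have "i \<in> I" using s(3)[OF m] by simp
    ultimately show ?thesis using s(4)[of i] by simp
  qed
  have e: "lam i = mu (?t i)" for i using s(4)[of "?t i"] st by simp
  show ?thesis by (rule wsim_intro[OF wsim_weight(2,1)[OF assms] bt ft c e])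
qed

lemma wsim_trans:
  assumes "wsim I lam mu" "wsim I mu nu" shows "wsim I lam nu"
proof -
  obtain \<sigma> where s: "bij \<sigma>" "finite {i. \<sigma> i \<noteq> i}" "\<And>i. \<sigma> i \<noteq> i \<Longrightarrow> i \<in> I \<and> lam i \<in> {Vee, Wedge}"
    "\<And>i. mu i = lam (\<sigma> i)" using wsim_E[OF assms(1)] by blast
  obtain \<tau> where t: "bij \<tau>" "finite {i. \<tau> i \<noteq> i}" "\<And>i. \<tau> i \<noteq> i \<Longrightarrow> i \<in> I \<and> mu i \<in> {Vee, Wedge}"
    "\<And>i. nu i = mu (\<tau> i)" using wsim_E[OF assms(2)] by blast
  let ?r = "\<sigma> \<circ> \<tau>"
  have br: "bij ?r" using s(1) t(1) by (rule bij_comp[rotated])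
  have "{i. ?r i \<noteq> i} \<subseteq> {i. \<sigma> i \<noteq> i} \<union> {i. \<tau> i \<noteq> i}" by auto
  hence fr: "finite {i. ?r i \<noteq> i}" using s(2) t(2) finite_subset by blast
  have c: "i \<in> I \<and> lam i \<in> {Vee, Wedge}" if "?r i \<noteq> i" for i
  proof (cases "\<sigma> i = i")
    case True
    hence "\<tau> i \<noteq> i" using that by auto
    hence "i \<in> I \<and> mu i \<in> {Vee, Wedge}" by (rule t(3))
    thus ?thesis using s(4)[of i] True by simp
  next
    case False thus ?thesis using s(3) by blast
  qed
  have e: "nu i = lam (?r i)" for i using s(4) t(4) by simp
  show ?thesis by (rule wsim_intro[OF wsim_weight(1)[OF assms(1)] wsim_weight(2)[OF assms(2)] br fr c e])
qed

lemma wsim_fix: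
  assumes "wsim I lam mu" "i \<notin> I \<or> (lam i \<noteq> Vee \<and> lam i \<noteq> Wedge)" shows "mu i = lam i"
proof -
  obtain \<sigma> where s: "bij \<sigma>" "finite {i. \<sigma> i \<noteq> i}" "\<And>i. \<sigma> i \<noteq> i \<Longrightarrow> i \<in> I \<and> lam i \<in> {Vee, Wedge}"
    "\<And>i. mu i = lam (\<sigma> i)" using wsim_E[OF assms(1)] by blast
  have "\<sigma> i = i" using s(3)[of i] assms(2) by auto
  thus ?thesis using s(4) by simp
qed

lemma wsim_PP:
  assumes "wsim I lam mu" shows "PP I mu = PP I lam"
proof -
  have "(mu i = Vee \<or> mu i = Wedge) \<longleftrightarrow> (lam i = Vee \<or> lam i = Wedge)" if "i \<in> I" for i
  proof
    assume a: "mu i = Vee \<or> mu i = Wedge"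
    show "lam i = Vee \<or> lam i = Wedge"
    proof (rule ccontr)
      assume "\<not> (lam i = Vee \<or> lam i = Wedge)"
      hence "mu i = lam i" using wsim_fix[OF assms, of i] by auto
      thus False using a \<open>\<not> (lam i = Vee \<or> lam i = Wedge)\<close> by simp
    qed
  next
    assume a: "lam i = Vee \<or> lam i = Wedge"
    show "mu i = Vee \<or> mu i = Wedge"
    proof (rule ccontr)
      assume "\<not> (mu i = Vee \<or> mu i = Wedge)"
      hence "lam i = mu i" using wsim_fix[OF wsim_sym[OF assms], of i] by auto
      thus False using a \<open>\<not> (mu i = Vee \<or> mu i = Wedge)\<close> by simp
    qed
  qed
  thus ?thesis unfolding PP_def by auto
qed

lemma wsim_count:
  assumes "wsim I lam mu"
  obtains S where "finite S" "S \<subseteq> I" "\<And>i. i \<notin> S \<Longrightarrow> mu i = lam i"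
    "\<And>T l. finite T \<Longrightarrow> S \<subseteq> T \<Longrightarrow> card {i\<in>T. mu i = l} = card {i\<in>T. lam i = l}"
proof -
  obtain \<sigma> where s: "bij \<sigma>" "finite {i. \<sigma> i \<noteq> i}" "\<And>i. \<sigma> i \<noteq> i \<Longrightarrow> i \<in> I \<and> lam i \<in> {Vee, Wedge}"
    "\<And>i. mu i = lam (\<sigma> i)" using wsim_E[OF assms(1)] by blast
  let ?S = "{i. \<sigma> i \<noteq> i}"
  have inj: "inj \<sigma>" using s(1) bij_is_inj by blast
  have sub: "\<sigma> ` ?S \<subseteq> ?S"
  proof
    fix y assume "y \<in> \<sigma> ` ?S"
    then obtain i where i: "\<sigma> i \<noteq> i" "y = \<sigma> i" by auto
    show "y \<in> ?S" using moved_closed[OF s(1) i(1)] i(2) by simp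
  qed
  have SS: "\<sigma> ` ?S = ?S" by (rule endo_inj_surj[OF s(2) sub]) (meson inj inj_on_subset subset_UNIV)
  have cnt: "card {i\<in>T. mu i = l} = card {i\<in>T. lam i = l}" if T: "finite T" "?S \<subseteq> T" for T l
  proof -
    have fx: "\<And>i. i \<in> T - ?S \<Longrightarrow> \<sigma> i = i" by simp
    have "\<sigma> ` (T - ?S) = (\<lambda>x. x) ` (T - ?S)" by (rule image_cong[OF refl fx])
    hence i2: "\<sigma> ` (T - ?S) = T - ?S" by simp
    have u: "?S \<union> (T - ?S) = T" using T(2) by blast
    have "\<sigma> ` T = \<sigma> ` ?S \<union> \<sigma> ` (T - ?S)" by (simp only: image_Un[symmetric] u)
    hence "\<sigma> ` T = ?S \<union> (T - ?S)" by (simp only: SS i2)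
    hence sT: "\<sigma> ` T = T" by (simp only: u)
    have "\<sigma> ` {i\<in>T. lam (\<sigma> i) = l} = {j\<in>T. lam j = l}"
    proof
      show "\<sigma> ` {i\<in>T. lam (\<sigma> i) = l} \<subseteq> {j\<in>T. lam j = l}" using sT by auto
      show "{j\<in>T. lam j = l} \<subseteq> \<sigma> ` {i\<in>T. lam (\<sigma> i) = l}"
      proof
        fix j assume j: "j \<in> {j\<in>T. lam j = l}"
        then obtain i where "i \<in> T" "j = \<sigma> i" using sT by (metis (no_types, lifting) image_iff mem_Collect_eq)
        thus "j \<in> \<sigma> ` {i\<in>T. lam (\<sigma> i) = l}" using j by auto
      qed
    qed
    moreover have "card (\<sigma> ` {i\<in>T. lam (\<sigma> i) = l}) = card {i\<in>T. lam (\<sigma> i) = l}"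
      by (rule card_image) (meson inj inj_on_subset subset_UNIV)
    ultimately show ?thesis using s(4) by simp
  qed
  have SI: "?S \<subseteq> I"
  proof
    fix i assume "i \<in> ?S"
    hence "\<sigma> i \<noteq> i" by simp
    from s(3)[OF this] show "i \<in> I" by simp
  qed
  have fx: "mu i = lam i" if "i \<notin> ?S" for i
  proof -
    have "\<sigma> i = i" using that by simp
    thus ?thesis using s(4)[of i] by simp
  qed
  show ?thesis by (rule that[OF s(2) SI fx cnt])
qed

lemma weight_change:
  assumes "weight I lam" "finite D" "\<And>i. i \<notin> D \<Longrightarrow> mu i = lam i" shows "weight I mu"
proof -
  obtain F where F: "finite F" "\<forall>i j. i \<in> I - F \<longrightarrow> j \<in> I - F \<longrightarrow> i < j \<longrightarrow> \<not> (lam i = Vee \<and> lam j = Wedge)"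
    using assms(1) unfolding weight_def by blast
  have "finite (F \<union> D)" using F(1) assms(2) by simp
  moreover have "\<forall>i j. i \<in> I - (F \<union> D) \<longrightarrow> j \<in> I - (F \<union> D) \<longrightarrow> i < j \<longrightarrow> \<not> (mu i = Vee \<and> mu j = Wedge)"
    using F(2) assms(3) by auto
  ultimately show ?thesis unfolding weight_def by blast
qed

lemma card_endsV:
  assumes cd: "cup_diagram I c" and o: "oriented I c lam"
  shows "card {i\<in>cup_ends (fst c). lam i = Vee} = card (fst c)"
proof -
  let ?h = "\<lambda>p. if lam (fst p) = Vee then fst p else snd p"
  have "bij_betw ?h (fst c) {i\<in>cup_ends (fst c). lam i = Vee}"
  proof (rule bij_betwI')
    fix p q assume p: "p \<in> fst c" and q: "q \<in> fst c"
    obtain a b where ab: "p = (a,b)" by fastforce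
    obtain a' b' where ab': "q = (a',b')" by fastforce
    have "?h p = ?h q \<Longrightarrow> p = q" using cd_disj2[OF cd, of a b a' b'] p q ab ab'
      by (cases "lam a = Vee"; cases "lam a' = Vee") auto
    moreover have "p = q \<Longrightarrow> ?h p = ?h q" by simp
    ultimately show "(?h p = ?h q) = (p = q)" by blast
  next
    fix p assume p: "p \<in> fst c"
    obtain a b where ab: "p = (a,b)" by fastforce
    have "lam a = Vee \<or> lam b = Vee" using or_cup[OF o, of a b] p ab by auto
    thus "?h p \<in> {i\<in>cup_ends (fst c). lam i = Vee}" using p ab unfolding mem_ends by auto
  next
    fix i assume "i \<in> {i\<in>cup_ends (fst c). lam i = Vee}"
    hence i: "i \<in> cup_ends (fst c)" "lam i = Vee" by auto
    then consider e where "(i,e) \<in> fst c" | a where "(a,i) \<in> fst c" unfolding mem_ends by blast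
    thus "\<exists>p\<in>fst c. i = ?h p"
    proof cases
      case (1 e) thus ?thesis using i by force
    next
      case (2 a)
      hence "lam a = Wedge" using or_cup[OF o 2] i by auto
      thus ?thesis using 2 i by force
    qed
  qed
  thus ?thesis by (simp add: bij_betw_same_card)
qed

lemma card_split3:
  assumes "finite T" "E \<subseteq> T" "E \<inter> R = {}"
  shows "card {i\<in>T. g i} = card {i\<in>E. g i} + card {i\<in>T \<inter> R. g i} + card {i\<in>T - E - R. g i}"
proof -
  have "{i\<in>T. g i} = {i\<in>E. g i} \<union> ({i\<in>T \<inter> R. g i} \<union> {i\<in>T - E - R. g i})" using assms by auto
  moreover have "card ({i\<in>E. g i} \<union> ({i\<in>T \<inter> R. g i} \<union> {i\<in>T - E - R. g i}))
     = card {i\<in>E. g i} + card ({i\<in>T \<inter> R. g i} \<union> {i\<in>T - E - R. g i})"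
    by (rule card_Un_disjoint) (use assms in \<open>auto intro: finite_subset\<close>)
  moreover have "card ({i\<in>T \<inter> R. g i} \<union> {i\<in>T - E - R. g i}) = card {i\<in>T \<inter> R. g i} + card {i\<in>T - E - R. g i}"
    by (rule card_Un_disjoint) (use assms in auto)
  ultimately show ?thesis by simp
qed

lemma no_flip:
  assumes S: "finite S" "S \<subseteq> I" "\<And>i. i \<notin> S \<Longrightarrow> mu i = lam i"
    and cnt: "\<And>T. finite T \<Longrightarrow> S \<subseteq> T \<Longrightarrow> card {i\<in>T. mu i = Vee} = card {i\<in>T. lam i = Vee}"
    and cd: "cup_diagram I c" and ol: "oriented I c lam" and om: "oriented I c mu"
    and r0: "r0 \<in> snd c" "lam r0 = Vee" "mu r0 = Wedge"
  shows False
proof -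
  let ?E = "cup_ends (fst c)" and ?R = "snd c"
  have fE: "finite ?E" using cd_fin[OF cd] unfolding cup_ends_def by simp
  let ?T = "S \<union> ?E \<union> {r0}"
  have fT: "finite ?T" using S(1) fE by simp
  have ER: "?E \<inter> ?R = {}" using cd_Rends[OF cd] by blast
  have ET: "?E \<subseteq> ?T" by auto
  have X: "{i\<in>?T - ?E - ?R. mu i = Vee} = {i\<in>?T - ?E - ?R. lam i = Vee}"
  proof -
    have "mu i = Vee \<longleftrightarrow> lam i = Vee" if "i \<notin> ?E" "i \<notin> ?R" for i
    proof (cases "i \<in> I")
      case True
      thus ?thesis using or_free[OF ol True that] or_free[OF om True that] by auto
    next
      case False
      hence "i \<notin> S" using S(2) by blast
      thus ?thesis using S(3)[of i] by simp
    qed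
    thus ?thesis by auto
  qed
  have EE: "card {i\<in>?E. mu i = Vee} = card {i\<in>?E. lam i = Vee}"
    using card_endsV[OF cd ol] card_endsV[OF cd om] by simp
  have sub: "{i\<in>?T \<inter> ?R. mu i = Vee} \<subset> {i\<in>?T \<inter> ?R. lam i = Vee}"
  proof
    show "{i\<in>?T \<inter> ?R. mu i = Vee} \<subseteq> {i\<in>?T \<inter> ?R. lam i = Vee}"
    proof
      fix i assume i: "i \<in> {i\<in>?T \<inter> ?R. mu i = Vee}"
      have "i \<noteq> r0" using i r0 by auto
      moreover have "\<not> i < r0" using or_ord[OF om, of i r0] i r0 by auto
      moreover have "lam i \<noteq> Wedge" if "r0 < i" using or_ord[OF ol, of r0 i] i r0 that by auto
      ultimately have "lam i = Vee" using or_ray[OF ol, of i] i by fastforce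
      thus "i \<in> {i\<in>?T \<inter> ?R. lam i = Vee}" using i by auto
    qed
    have "r0 \<in> {i\<in>?T \<inter> ?R. lam i = Vee}" "r0 \<notin> {i\<in>?T \<inter> ?R. mu i = Vee}" using r0 by auto
    thus "{i\<in>?T \<inter> ?R. mu i = Vee} \<noteq> {i\<in>?T \<inter> ?R. lam i = Vee}" by blast
  qed
  have "card {i\<in>?T \<inter> ?R. mu i = Vee} < card {i\<in>?T \<inter> ?R. lam i = Vee}"
    by (rule psubset_card_mono[OF _ sub]) (use fT in auto)
  hence "card {i\<in>?T. mu i = Vee} < card {i\<in>?T. lam i = Vee}"
    using card_split3[OF fT ET ER, of "\<lambda>i. mu i = Vee"] card_split3[OF fT ET ER, of "\<lambda>i. lam i = Vee"] X EE by simp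
  thus False using cnt[OF fT] by auto
qed

lemma ray_agree:
  assumes w: "wsim I lam mu" and cd: "cup_diagram I c" and ol: "oriented I c lam" and om: "oriented I c mu"
    and r: "r \<in> snd c"
  shows "mu r = lam r"
proof (rule ccontr)
  assume ne: "mu r \<noteq> lam r"
  obtain S where S: "finite S" "S \<subseteq> I" "\<And>i. i \<notin> S \<Longrightarrow> mu i = lam i"
    "\<And>T l. finite T \<Longrightarrow> S \<subseteq> T \<Longrightarrow> card {i\<in>T. mu i = l} = card {i\<in>T. lam i = l}"
    using wsim_count[OF w] by blast
  have "lam r = Vee \<or> lam r = Wedge" "mu r = Vee \<or> mu r = Wedge" using or_ray[OF ol r] or_ray[OF om r] by auto
  hence "(lam r = Vee \<and> mu r = Wedge) \<or> (mu r = Vee \<and> lam r = Wedge)" using ne by auto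
  thus False
  proof
    assume "lam r = Vee \<and> mu r = Wedge"
    thus False using no_flip[OF S(1,2,3) S(4) cd ol om r] by blast
  next
    assume a: "mu r = Vee \<and> lam r = Wedge"
    have S3: "\<And>i. i \<notin> S \<Longrightarrow> lam i = mu i" using S(3) by metis
    have S4: "\<And>T. finite T \<Longrightarrow> S \<subseteq> T \<Longrightarrow> card {i\<in>T. lam i = Vee} = card {i\<in>T. mu i = Vee}" using S(4) by metis
    show False using no_flip[OF S(1,2) S3 S4 cd om ol r] a by blast
  qed
qed


lemma oriented_intro:
  assumes "\<And>i. i \<in> I \<Longrightarrow> i \<notin> cup_ends (fst c) \<Longrightarrow> i \<notin> snd c \<Longrightarrow> lam i \<in> {Circ, Cross}"
    "\<And>a b. (a,b) \<in> fst c \<Longrightarrow> (lam a = Vee \<and> lam b = Wedge) \<or> (lam a = Wedge \<and> lam b = Vee)"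
    "\<And>r. r \<in> snd c \<Longrightarrow> lam r \<in> {Vee, Wedge}"
    "\<And>r1 r2. r1 \<in> snd c \<Longrightarrow> r2 \<in> snd c \<Longrightarrow> r1 < r2 \<Longrightarrow> \<not> (lam r1 = Vee \<and> lam r2 = Wedge)"
  shows "oriented I c lam"
  unfolding oriented_def Let_def using assms by (intro conjI) (blast, fast, blast, blast)

fun opp :: "label \<Rightarrow> label" where
  "opp Vee = Wedge" | "opp Wedge = Vee" | "opp Circ = Circ" | "opp Cross = Cross"

definition flip :: "(int \<times> int) set \<Rightarrow> (int \<Rightarrow> label) \<Rightarrow> int \<Rightarrow> label" where
  "flip A lam i = (if i \<in> cup_ends A then opp (lam i) else lam i)"

definition partner :: "(int \<times> int) set \<Rightarrow> int \<Rightarrow> int" where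
  "partner A i = (if \<exists>b. (i,b) \<in> A then (THE b. (i,b) \<in> A) else if \<exists>a. (a,i) \<in> A then (THE a. (a,i) \<in> A) else i)"

lemma ends_mono: "A \<subseteq> C \<Longrightarrow> cup_ends A \<subseteq> cup_ends C"
  unfolding cup_ends_def by auto

lemma finite_ends: "finite A \<Longrightarrow> finite (cup_ends A)"
  unfolding cup_ends_def by simp

lemma end_in_A:
  assumes cd: "cup_diagram I c" and A: "A \<subseteq> fst c" and ab: "(a,b) \<in> fst c" and i: "a \<in> cup_ends A \<or> b \<in> cup_ends A"
  shows "(a,b) \<in> A"
proof -
  have key: "(a,b) \<in> A" if q: "(x,y) \<in> A" "a = x \<or> a = y \<or> b = x \<or> b = y" for x y
  proof -
    have qC: "(x,y) \<in> fst c" using q(1) A by blast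
    have "a = x \<and> b = y" by (rule cd_disj2[OF cd ab qC]) (use q(2) in blast)
    thus ?thesis using q(1) by simp
  qed
  from i show ?thesis unfolding mem_ends using key by blast
qed



lemma partner_ab:
  assumes cd: "cup_diagram I c" and A: "A \<subseteq> fst c" and ab: "(a,b) \<in> A"
  shows "partner A a = b" "partner A b = a"
proof -
  have abC: "(a,b) \<in> fst c" using A ab by auto
  have u1: "b' = b" if "(a,b') \<in> A" for b'
  proof -
    have "(a,b') \<in> fst c" using A that by auto
    from cd_disj2[OF cd this abC] show ?thesis by simp
  qed
  have u2: "a' = a" if "(a',b) \<in> A" for a'
  proof -
    have "(a',b) \<in> fst c" using A that by auto
    from cd_disj2[OF cd this abC] show ?thesis by simp
  qed
  have n: "(b,e) \<notin> A" for e
  proof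
    assume "(b,e) \<in> A"
    hence "(b,e) \<in> fst c" using A by auto
    from cd_disj2[OF cd this abC] have "b = a" by simp
    thus False using cd_in[OF cd abC] by auto
  qed
  have t1: "(THE b'. (a,b') \<in> A) = b" by (rule the_equality, rule ab, rule u1)
  have e1: "\<exists>b'. (a,b') \<in> A" using ab by blast
  show "partner A a = b" unfolding partner_def if_P[OF e1] by (rule t1)
  have t2: "(THE a'. (a',b) \<in> A) = a" by (rule the_equality, rule ab, rule u2)
  have e2: "\<exists>a'. (a',b) \<in> A" using ab by blast
  have e3: "\<not> (\<exists>e. (b,e) \<in> A)" using n by blast
  show "partner A b = a" unfolding partner_def if_not_P[OF e3] if_P[OF e2] by (rule t2)
qed

lemma partner_out:
  assumes "i \<notin> cup_ends A" shows "partner A i = i"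
proof -
  have e1: "\<not> (\<exists>b. (i,b) \<in> A)" "\<not> (\<exists>a. (a,i) \<in> A)" using assms unfolding mem_ends by blast+
  show ?thesis unfolding partner_def if_not_P[OF e1(1)] if_not_P[OF e1(2)] ..
qed

lemma flip_props:
  assumes w: "weight I lam" and v: "valid I c lam" and A: "A \<subseteq> fst c"
  shows "wsim I lam (flip A lam)" "oriented I c (flip A lam)"
proof -
  have cd: "cup_diagram I c" and o: "oriented I c lam" and d0: "cdeg c lam = 0" using v unfolding valid_def by auto
  have fA: "finite A" using cd_fin[OF cd] A finite_subset by blast
  have lab: "lam a = Vee \<and> lam b = Wedge" if "(a,b) \<in> fst c" for a b using deg0[OF cd o d0 that] .
  let ?s = "partner A"
  have ss: "?s (?s i) = i" for i
  proof (cases "i \<in> cup_ends A")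
    case True
    then consider e where "(i,e) \<in> A" | a where "(a,i) \<in> A" unfolding mem_ends by blast
    thus ?thesis
    proof cases
      case (1 e) thus ?thesis using partner_ab[OF cd A 1] by simp
    next
      case (2 a) thus ?thesis using partner_ab[OF cd A 2] by simp
    qed
  next
    case False thus ?thesis using partner_out by simp
  qed
  have bs: "bij ?s" by (rule o_bij[of ?s]) (use ss in auto)
  have sup: "{i. ?s i \<noteq> i} \<subseteq> cup_ends A" using partner_out by blast
  have fs: "finite {i. ?s i \<noteq> i}" using finite_subset[OF sup finite_ends[OF fA]] .
  have mv: "i \<in> I \<and> lam i \<in> {Vee, Wedge}" if "?s i \<noteq> i" for i
  proof -
    have "i \<in> cup_ends A" using sup that by blast
    then consider e where "(i,e) \<in> fst c" | a where "(a,i) \<in> fst c" using A unfolding mem_ends by blast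
    thus ?thesis
    proof cases
      case (1 e) thus ?thesis using cd_in[OF cd 1] lab[OF 1] by simp
    next
      case (2 a) thus ?thesis using cd_in[OF cd 2] lab[OF 2] by simp
    qed
  qed
  have fe: "flip A lam i = lam (?s i)" for i
  proof (cases "i \<in> cup_ends A")
    case True
    then consider e where "(i,e) \<in> A" | a where "(a,i) \<in> A" unfolding mem_ends by blast
    thus ?thesis
    proof cases
      case (1 e) thus ?thesis using partner_ab[OF cd A 1] lab[of i e] A True unfolding flip_def by auto
    next
      case (2 a) thus ?thesis using partner_ab[OF cd A 2] lab[of a i] A True unfolding flip_def by auto
    qed
  next
    case False thus ?thesis using partner_out unfolding flip_def by simp
  qed
  have wf: "weight I (flip A lam)"
    by (rule weight_change[OF w finite_ends[OF fA]]) (simp add: flip_def)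
  show "wsim I lam (flip A lam)" by (rule wsim_intro[OF w wf bs fs mv fe])
  have EA: "cup_ends A \<subseteq> cup_ends (fst c)" by (rule ends_mono[OF A])
  show "oriented I c (flip A lam)"
  proof (rule oriented_intro)
    fix i assume "i \<in> I" "i \<notin> cup_ends (fst c)" "i \<notin> snd c"
    thus "flip A lam i \<in> {Circ, Cross}" using or_free[OF o] EA unfolding flip_def by auto
  next
    fix a b assume ab: "(a,b) \<in> fst c"
    show "(flip A lam a = Vee \<and> flip A lam b = Wedge) \<or> (flip A lam a = Wedge \<and> flip A lam b = Vee)"
    proof (cases "(a,b) \<in> A")
      case True
      hence "a \<in> cup_ends A" "b \<in> cup_ends A" unfolding mem_ends by auto
      thus ?thesis using lab[OF ab] unfolding flip_def by simp
    next
      case False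
      hence "a \<notin> cup_ends A" "b \<notin> cup_ends A" using end_in_A[OF cd A ab] by auto
      thus ?thesis using lab[OF ab] unfolding flip_def by simp
    qed
  next
    fix r assume r: "r \<in> snd c"
    hence "r \<notin> cup_ends A" using cd_Rends[OF cd r] EA by blast
    thus "flip A lam r \<in> {Vee, Wedge}" using or_ray[OF o r] unfolding flip_def by simp
  next
    fix r1 r2 assume r: "r1 \<in> snd c" "r2 \<in> snd c" "r1 < r2"
    hence "r1 \<notin> cup_ends A" "r2 \<notin> cup_ends A" using cd_Rends[OF cd] EA by blast+
    thus "\<not> (flip A lam r1 = Vee \<and> flip A lam r2 = Wedge)" using or_ord[OF o r] unfolding flip_def by auto
  qed
qed

lemma part1:
  assumes w: "weight I lam"
  shows "finite {mu. wsub I lam mu} \<and> card {mu. wsub I lam mu} = 2 ^ defect I lam"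
proof -
  let ?c = "under I lam"
  let ?C = "fst ?c"
  have v: "valid I ?c lam" by (rule valid_under[OF w])
  have cd: "cup_diagram I ?c" and o: "oriented I ?c lam" and d0: "cdeg ?c lam = 0" using v unfolding valid_def by auto
  have fC: "finite ?C" by (rule cd_fin[OF cd])
  have lab: "lam a = Vee \<and> lam b = Wedge" if "(a,b) \<in> ?C" for a b using deg0[OF cd o d0 that] .
  let ?f = "\<lambda>A. flip A lam"
  have X: "{mu. wsub I lam mu} = ?f ` Pow ?C"
  proof
    show "?f ` Pow ?C \<subseteq> {mu. wsub I lam mu}"
    proof
      fix mu assume "mu \<in> ?f ` Pow ?C"
      then obtain A where A: "A \<subseteq> ?C" "mu = flip A lam" by auto
      show "mu \<in> {mu. wsub I lam mu}" using flip_props[OF w v A(1)] A(2) unfolding wsub_def by simp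
    qed
    show "{mu. wsub I lam mu} \<subseteq> ?f ` Pow ?C"
    proof
      fix mu assume "mu \<in> {mu. wsub I lam mu}"
      hence ws: "wsim I lam mu" and om: "oriented I ?c mu" unfolding wsub_def by auto
      let ?A = "{p \<in> ?C. mu (fst p) \<noteq> lam (fst p)}"
      have AC: "?A \<subseteq> ?C" by auto
      have "mu i = flip ?A lam i" for i
      proof (cases "i \<in> cup_ends ?C")
        case True
        then obtain a b where ab: "(a,b) \<in> ?C" "i = a \<or> i = b" unfolding mem_ends by blast
        have mo: "(mu a = Vee \<and> mu b = Wedge) \<or> (mu a = Wedge \<and> mu b = Vee)" by (rule or_cup[OF om ab(1)])
        show ?thesis
        proof (cases "(a,b) \<in> ?A")
          case True
          hence "i \<in> cup_ends ?A" using ab unfolding mem_ends by auto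
          moreover have "mu a = Wedge" "mu b = Vee" using True lab[OF ab(1)] mo by auto
          ultimately show ?thesis using ab lab[OF ab(1)] unfolding flip_def by auto
        next
          case False
          hence "i \<notin> cup_ends ?A" using end_in_A[OF cd AC ab(1)] ab(2) by auto
          moreover have "mu a = Vee" "mu b = Wedge" using False ab(1) lab[OF ab(1)] mo by auto
          ultimately show ?thesis using ab lab[OF ab(1)] unfolding flip_def by auto
        qed
      next
        case False
        hence nA: "i \<notin> cup_ends ?A" using ends_mono[OF AC] by blast
        show ?thesis
        proof (cases "i \<in> snd ?c")
          case True
          thus ?thesis using ray_agree[OF ws cd o om True] nA unfolding flip_def by simp
        next
          case False
          have "i \<notin> PP I lam"
          proof
            assume "i \<in> PP I lam"
            hence "i \<in> PP I lam - cup_ends ?C" using \<open>i \<notin> cup_ends ?C\<close> by simp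
            hence "i \<in> snd ?c" using valid_R[OF v] by simp
            thus False using False by simp
          qed
          hence "i \<notin> I \<or> (lam i \<noteq> Vee \<and> lam i \<noteq> Wedge)" unfolding PP_def by auto
          thus ?thesis using wsim_fix[OF ws] nA unfolding flip_def by simp
        qed
      qed
      hence "mu = flip ?A lam" by (rule ext)
      moreover have "?A \<in> Pow ?C" using AC by simp
      ultimately show "mu \<in> ?f ` Pow ?C" by (rule image_eqI)
    qed
  qed
  have inj: "inj_on ?f (Pow ?C)"
  proof (rule inj_onI)
    fix A B assume A: "A \<in> Pow ?C" and B: "B \<in> Pow ?C" and eq: "?f A = ?f B"
    show "A = B"
    proof (rule ccontr)
      assume "A \<noteq> B"
      then obtain p where p: "(p \<in> A \<and> p \<notin> B) \<or> (p \<in> B \<and> p \<notin> A)" by blast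
      obtain a b where ab: "p = (a,b)" by fastforce
      have pC: "(a,b) \<in> ?C" using p ab A B by auto
      have la: "lam a = Vee" using lab[OF pC] by simp
      have AC': "A \<subseteq> ?C" and BC': "B \<subseteq> ?C" using A B by auto
      have d: "(a \<in> cup_ends A) \<noteq> (a \<in> cup_ends B)"
      proof (cases "p \<in> A")
        case True
        hence "p \<notin> B" using p by blast
        hence "a \<notin> cup_ends B" using end_in_A[OF cd BC' pC] ab by blast
        moreover have "a \<in> cup_ends A" using True ab unfolding mem_ends by blast
        ultimately show ?thesis by blast
      next
        case False
        hence "p \<in> B" using p by blast
        hence "a \<in> cup_ends B" using ab unfolding mem_ends by blast
        moreover have "a \<notin> cup_ends A" using end_in_A[OF cd AC' pC] ab False by blast
        ultimately show ?thesis by blast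
      qed
      have "flip A lam a \<noteq> flip B lam a" using d la unfolding flip_def by (cases "a \<in> cup_ends A") auto
      thus False using eq by metis
    qed
  qed
  have "card {mu. wsub I lam mu} = card (Pow ?C)" using X card_image[OF inj] by simp
  also have "\<dots> = 2 ^ card ?C" by (rule card_Pow[OF fC])
  finally show ?thesis using X fC unfolding defect_def by simp
qed


lemma near_finite_half:
  fixes P :: "int set"
  shows "finite {x\<in>P. k \<le> x \<and> card (P \<inter> {k..x}) \<le> n}"
proof (rule ccontr)
  let ?Y = "{x\<in>P. k \<le> x \<and> card (P \<inter> {k..x}) \<le> n}"
  assume "infinite ?Y"
  then obtain Z where Z: "finite Z" "card Z = Suc n" "Z \<subseteq> ?Y" using infinite_arbitrarily_large by blast
  have ne: "Z \<noteq> {}" using Z(2) by auto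
  define m where "m = Max Z"
  have mZ: "m \<in> Z" unfolding m_def using Max_in[OF Z(1) ne] .
  have "Z \<subseteq> P \<inter> {k..m}"
  proof
    fix z assume z: "z \<in> Z"
    have "z \<le> m" unfolding m_def using Max_ge[OF Z(1) z] .
    thus "z \<in> P \<inter> {k..m}" using z Z(3) by auto
  qed
  hence "card Z \<le> card (P \<inter> {k..m})" by (rule card_mono[rotated]) simp
  moreover have "card (P \<inter> {k..m}) \<le> n" using mZ Z(3) by auto
  ultimately show False using Z(2) by simp
qed

lemma near_finite_half2:
  fixes P :: "int set"
  shows "finite {x\<in>P. x \<le> k \<and> card (P \<inter> {x..k}) \<le> n}"
proof (rule ccontr)
  let ?Y = "{x\<in>P. x \<le> k \<and> card (P \<inter> {x..k}) \<le> n}"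
  assume "infinite ?Y"
  then obtain Z where Z: "finite Z" "card Z = Suc n" "Z \<subseteq> ?Y" using infinite_arbitrarily_large by blast
  have ne: "Z \<noteq> {}" using Z(2) by auto
  define m where "m = Min Z"
  have mZ: "m \<in> Z" unfolding m_def using Min_in[OF Z(1) ne] .
  have "Z \<subseteq> P \<inter> {m..k}"
  proof
    fix z assume z: "z \<in> Z"
    have "m \<le> z" unfolding m_def using Min_le[OF Z(1) z] .
    thus "z \<in> P \<inter> {m..k}" using z Z(3) by auto
  qed
  hence "card Z \<le> card (P \<inter> {m..k})" by (rule card_mono[rotated]) simp
  moreover have "card (P \<inter> {m..k}) \<le> n" using mZ Z(3) by auto
  ultimately show False using Z(2) by simp
qed

definition near :: "int set \<Rightarrow> nat \<Rightarrow> int \<Rightarrow> int set" where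
  "near P n k = {x\<in>P. card (P \<inter> {min x k..max x k}) \<le> n}"

lemma near_finite: "finite (near P n k)"
proof -
  let ?Y1 = "{x\<in>P. k \<le> x \<and> card (P \<inter> {k..x}) \<le> n}" and ?Y2 = "{x\<in>P. x \<le> k \<and> card (P \<inter> {x..k}) \<le> n}"
  have "near P n k \<subseteq> ?Y1 \<union> ?Y2"
  proof
    fix x assume x: "x \<in> near P n k"
    show "x \<in> ?Y1 \<union> ?Y2"
    proof (cases "k \<le> x")
      case True
      hence "min x k = k" "max x k = x" by auto
      thus ?thesis using x True unfolding near_def by auto
    next
      case False
      hence "min x k = x" "max x k = k" by auto
      thus ?thesis using x False unfolding near_def by auto
    qed
  qed
  moreover have "finite (?Y1 \<union> ?Y2)" using near_finite_half near_finite_half2 by (rule finite_UnI)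
  ultimately show ?thesis by (rule finite_subset)
qed

lemma card_ends_le: "finite C \<Longrightarrow> card (cup_ends C) \<le> 2 * card C"
proof -
  assume fC: "finite C"
  have "card (cup_ends C) \<le> card (fst ` C) + card (snd ` C)" unfolding cup_ends_def by (rule card_Un_le)
  also have "\<dots> \<le> card C + card C" by (intro add_mono card_image_le fC)
  finally show ?thesis by simp
qed

lemma under_fst_det:
  assumes "weight I m1" "weight I m2" "PP I m1 = PP I m2" "fst (under I m1) = fst (under I m2)"
  shows "under I m1 = under I m2"
proof -
  have "under I m1 = canon I m1" "under I m2 = canon I m2" using under_canon assms(1,2) by blast+
  thus ?thesis using assms(3,4) unfolding canon_def by simp
qed

lemma wsub_facts:
  assumes "wsub I mu lam"
  shows "wsim I lam mu" "weight I mu" "valid I (under I mu) mu" "oriented I (under I mu) lam" "PP I mu = PP I lam"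
proof -
  have ws: "wsim I mu lam" and o: "oriented I (under I mu) lam" using assms unfolding wsub_def by auto
  show "wsim I lam mu" by (rule wsim_sym[OF ws])
  show wm: "weight I mu" by (rule wsim_weight(1)[OF ws])
  show "valid I (under I mu) mu" by (rule valid_under[OF wm])
  show "oriented I (under I mu) lam" by (rule o)
  show "PP I mu = PP I lam" using wsim_PP[OF wsim_sym[OF ws]] .
qed

lemma wsub_inj:
  assumes m1: "wsub I m1 lam" and m2: "wsub I m2 lam" and eq: "fst (under I m1) = fst (under I m2)"
  shows "m1 = m2"
proof -
  note f1 = wsub_facts[OF m1] and f2 = wsub_facts[OF m2]
  have uu: "under I m1 = under I m2" by (rule under_fst_det[OF f1(2) f2(2)]) (use f1(5) f2(5) eq in auto)
  let ?c = "under I m1"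
  have cd: "cup_diagram I ?c" and v1: "valid I ?c m1" and v2: "valid I ?c m2"
    using f1(3) f2(3) uu unfolding valid_def by auto
  have o1: "oriented I ?c m1" and o2: "oriented I ?c m2" and d1: "cdeg ?c m1 = 0" and d2: "cdeg ?c m2 = 0"
    using v1 v2 unfolding valid_def by auto
  have ol: "oriented I ?c lam" by (rule f1(4))
  have "m1 i = m2 i" for i
  proof (cases "i \<in> cup_ends (fst ?c)")
    case True
    then consider e where "(i,e) \<in> fst ?c" | a where "(a,i) \<in> fst ?c" unfolding mem_ends by blast
    thus ?thesis
    proof cases
      case (1 e) thus ?thesis using deg0[OF cd o1 d1 1] deg0[OF cd o2 d2 1] by simp
    next
      case (2 a) thus ?thesis using deg0[OF cd o1 d1 2] deg0[OF cd o2 d2 2] by simp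
    qed
  next
    case False
    show ?thesis
    proof (cases "i \<in> snd ?c")
      case True
      thus ?thesis using ray_agree[OF f1(1) cd ol o1 True] ray_agree[OF f2(1) cd ol o2 True] by simp
    next
      case False
      have "i \<notin> PP I m1"
      proof
        assume "i \<in> PP I m1"
        hence "i \<in> PP I m1 - cup_ends (fst ?c)" using \<open>i \<notin> cup_ends (fst ?c)\<close> by simp
        hence "i \<in> snd ?c" using valid_R[OF v1] by simp
        thus False using False by simp
      qed
      hence "i \<notin> PP I lam" using f1(5) by simp
      hence c: "i \<notin> I \<or> (lam i \<noteq> Vee \<and> lam i \<noteq> Wedge)" unfolding PP_def by auto
      show ?thesis using wsim_fix[OF f1(1) c] wsim_fix[OF f2(1) c] by simp
    qed
  qed
  thus ?thesis by (rule ext)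
qed

lemma cup_span:
  assumes m: "wsub I mu lam" and ab: "(a,b) \<in> fst (under I mu)"
  shows "PP I lam \<inter> {a..b} \<subseteq> cup_ends (fst (under I mu))"
proof
  note f = wsub_facts[OF m]
  have cd: "cup_diagram I (under I mu)" using f(3) unfolding valid_def by auto
  fix i assume i: "i \<in> PP I lam \<inter> {a..b}"
  show "i \<in> cup_ends (fst (under I mu))"
  proof (cases "i = a \<or> i = b")
    case True thus ?thesis using ab unfolding mem_ends by blast
  next
    case False
    hence ai: "a < i" "i < b" using i by auto
    have "i \<notin> snd (under I mu)" using cd_Rin[OF cd _ ab] ai by blast
    moreover have "i \<in> PP I mu" using i f(5) by simp
    ultimately show ?thesis using valid_R[OF f(3)] by blast
  qed
qed

lemma fin_bounded:
  assumes w: "weight I lam" and F: "finite F"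
    "\<And>i j. i \<in> I \<Longrightarrow> j \<in> I \<Longrightarrow> i < j \<Longrightarrow> lam i = Vee \<Longrightarrow> lam j = Wedge \<Longrightarrow> i \<in> F \<or> j \<in> F"
  shows "finite {mu. wsub I mu lam \<and> defect I mu \<le> N}"
proof -
  let ?P = "PP I lam"
  let ?V = "{y\<in>?P - F. lam y = Vee}"
  let ?K = "F \<union> {x\<in>?V. \<forall>y\<in>?V. x \<le> y}"
  let ?E = "(\<Union>k\<in>?K. near ?P (2*N) k) \<union> ?K"
  have fK: "finite ?K"
  proof -
    have "finite {x\<in>?V. \<forall>y\<in>?V. x \<le> y}" by (rule subsingleton_finite) (auto intro: order_antisym)
    thus ?thesis using F(1) by simp
  qed
  have fE: "finite ?E" using fK near_finite by blast
  let ?X = "{mu. wsub I mu lam \<and> defect I mu \<le> N}"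
  let ?g = "\<lambda>mu. fst (under I mu)"
  have sub: "?g mu \<subseteq> ?E \<times> ?E" if mu: "mu \<in> ?X" for mu
  proof
    fix p assume p: "p \<in> ?g mu"
    obtain a b where ab: "p = (a,b)" by fastforce
    have m: "wsub I mu lam" and dN: "card (?g mu) \<le> N" using mu unfolding defect_def by auto
    note f = wsub_facts[OF m]
    have cd: "cup_diagram I (under I mu)" and om: "oriented I (under I mu) mu" and d0: "cdeg (under I mu) mu = 0"
      using f(3) unfolding valid_def by auto
    have abC: "(a,b) \<in> ?g mu" using p ab by simp
    have abI: "a \<in> I" "b \<in> I" "a < b" using cd_in[OF cd abC] by auto
    have ml: "mu a = Vee" "mu b = Wedge" using deg0[OF cd om d0 abC] by auto
    have aP: "a \<in> ?P" "b \<in> ?P" using abI ml f(5) unfolding PP_def by (auto simp: set_eq_iff)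
    have span: "card (?P \<inter> {a..b}) \<le> 2 * N"
    proof -
      have "card (?P \<inter> {a..b}) \<le> card (cup_ends (?g mu))"
        by (rule card_mono[OF finite_ends[OF cd_fin[OF cd]] cup_span[OF m abC]])
      also have "\<dots> \<le> 2 * card (?g mu)" by (rule card_ends_le[OF cd_fin[OF cd]])
      finally show ?thesis using dN by simp
    qed
    have inner: "card (?P \<inter> {min x y..max x y}) \<le> 2 * N" if "a \<le> x" "x \<le> b" "a \<le> y" "y \<le> b" for x y
    proof -
      have "?P \<inter> {min x y..max x y} \<subseteq> ?P \<inter> {a..b}" using that by auto
      hence "card (?P \<inter> {min x y..max x y}) \<le> card (?P \<inter> {a..b})" by (rule card_mono[rotated]) simp
      thus ?thesis using span by simp
    qed
    have ol: "(lam a = Vee \<and> lam b = Wedge) \<or> (lam a = Wedge \<and> lam b = Vee)" by (rule or_cup[OF f(4) abC])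
    have "a \<in> ?E \<and> b \<in> ?E"
    proof (cases "a \<in> F \<or> b \<in> F")
      case True
      thus ?thesis
      proof
        assume aF: "a \<in> F"
        have "b \<in> near ?P (2*N) a" unfolding near_def using aP inner[of b a] abI by auto
        thus ?thesis using aF by blast
      next
        assume bF: "b \<in> F"
        have "a \<in> near ?P (2*N) b" unfolding near_def using aP inner[of a b] abI by auto
        thus ?thesis using bF by blast
      qed
    next
      case False
      hence la: "lam a = Wedge" "lam b = Vee" using ol F(2)[OF abI] by auto
      have bV: "b \<in> ?V" using aP False la by auto
      let ?Vb = "{y\<in>?V. y \<le> b}"
      have gt: "a < y" if "y \<in> ?V" for y
      proof (rule ccontr)
        assume "\<not> a < y"
        moreover have "y \<noteq> a" using that la by auto
        ultimately have "y < a" by simp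
        moreover have "y \<in> I" "lam y = Vee" "y \<notin> F" using that unfolding PP_def by auto
        ultimately show False using F(2)[of y a] abI la False by auto
      qed
      have fVb: "finite ?Vb" by (rule finite_subset[of _ "{a..b}"]) (use gt in \<open>auto simp: less_imp_le\<close>)
      have neVb: "?Vb \<noteq> {}" using bV by auto
      define v where "v = Min ?Vb"
      have vV: "v \<in> ?Vb" unfolding v_def using Min_in[OF fVb neVb] .
      have vmin: "\<forall>y\<in>?V. v \<le> y"
      proof
        fix y assume y: "y \<in> ?V"
        show "v \<le> y"
        proof (cases "y \<le> b")
          case True thus ?thesis unfolding v_def using Min_le[OF fVb] y by auto
        next
          case False thus ?thesis using vV by auto
        qed
      qed
      have vK: "v \<in> ?K" using vV vmin by blast
      have av: "a < v" "v \<le> b" using gt vV by auto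
      have "a \<in> near ?P (2*N) v" unfolding near_def using aP inner[of a v] av by auto
      moreover have "b \<in> near ?P (2*N) v" unfolding near_def using aP inner[of b v] av by auto
      ultimately show ?thesis using vK by blast
    qed
    thus "p \<in> ?E \<times> ?E" using ab by simp
  qed
  have "?g ` ?X \<subseteq> Pow (?E \<times> ?E)" using sub by blast
  hence "finite (?g ` ?X)" using fE by (meson finite_Pow_iff finite_SigmaI finite_subset)
  moreover have "inj_on ?g ?X" by (rule inj_onI) (use wsub_inj in blast)
  ultimately show ?thesis using finite_imageD by blast
qed


lemma part3:
  assumes w: "weight I lam"
  shows "finite {mu. wsub I mu lam \<and> int (cdeg (under I mu) lam) = j}"
proof -
  obtain F where F: "finite F" "\<And>i j. i \<in> I \<Longrightarrow> j \<in> I \<Longrightarrow> i < j \<Longrightarrow> lam i = Vee \<Longrightarrow> lam j = Wedge \<Longrightarrow> i \<in> F \<or> j \<in> F"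
    using weight_pair[OF w] by blast
  have "{mu. wsub I mu lam \<and> int (cdeg (under I mu) lam) = j} \<subseteq> {mu. wsub I mu lam \<and> defect I mu \<le> card F + nat j}"
  proof
    fix mu assume "mu \<in> {mu. wsub I mu lam \<and> int (cdeg (under I mu) lam) = j}"
    hence m: "wsub I mu lam" and dj: "int (cdeg (under I mu) lam) = j" by auto
    note f = wsub_facts[OF m]
    let ?C = "fst (under I mu)"
    have cd: "cup_diagram I (under I mu)" using f(3) unfolding valid_def by auto
    have fC: "finite ?C" by (rule cd_fin[OF cd])
    have ol: "oriented I (under I mu) lam" by (rule f(4))
    let ?C1 = "{p\<in>?C. lam (fst p) = Wedge}" and ?C2 = "{p\<in>?C. lam (fst p) \<noteq> Wedge}"
    have "?C \<subseteq> ?C1 \<union> ?C2" by blast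
    hence "card ?C \<le> card (?C1 \<union> ?C2)" by (rule card_mono[rotated]) (use fC in simp)
    also have "\<dots> \<le> card ?C1 + card ?C2" by (rule card_Un_le)
    finally have c0: "card ?C \<le> card ?C1 + card ?C2" .
    have cc: "cdeg (under I mu) lam = card {(a,b)\<in>?C. lam a = Wedge}" unfolding cdeg_def by (rule refl)
    have "{(a,b)\<in>?C. lam a = Wedge} = ?C1" by (auto simp: case_prod_beta)
    hence c1: "card ?C1 = cdeg (under I mu) lam" using cc by simp
    have c2: "card ?C2 \<le> card F"
    proof -
      let ?h = "\<lambda>p. if fst p \<in> F then fst p else snd p"
      have inF: "?h p \<in> F" if p: "p \<in> ?C2" for p
      proof -
        obtain a b where ab: "p = (a,b)" by fastforce
        have abC: "(a,b) \<in> ?C" using p ab by simp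
        have "lam a = Vee" "lam b = Wedge" using or_cup[OF ol abC] p ab by auto
        hence "a \<in> F \<or> b \<in> F" using F(2)[of a b] cd_in[OF cd abC] by auto
        thus ?thesis using ab by auto
      qed
      have "inj_on ?h ?C2"
      proof (rule inj_onI)
        fix p q assume p: "p \<in> ?C2" and q: "q \<in> ?C2" and e: "?h p = ?h q"
        obtain a b where ab: "p = (a,b)" by fastforce
        obtain a' b' where ab': "q = (a',b')" by fastforce
        have pC: "(a,b) \<in> ?C" and qC: "(a',b') \<in> ?C" using p q ab ab' by auto
        have "a = a' \<or> a = b' \<or> b = a' \<or> b = b'" using e ab ab' by (auto split: if_splits)
        from cd_disj2[OF cd pC qC this] show "p = q" using ab ab' by simp
      qed
      moreover have "?h ` ?C2 \<subseteq> F" using inF by blast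
      ultimately show ?thesis using card_inj_on_le F(1) by blast
    qed
    have "card ?C \<le> card F + nat j" using c0 c1 c2 dj by linarith
    thus "mu \<in> {mu. wsub I mu lam \<and> defect I mu \<le> card F + nat j}" using m unfolding defect_def by simp
  qed
  thus ?thesis by (rule finite_subset[OF _ fin_bounded[OF w F]])
qed

lemma part2a:
  assumes w: "weight I lam" and b: "block_defect I lam < \<infinity>"
  shows "finite {mu. wsub I mu lam}"
proof -
  obtain d where d: "block_defect I lam = enat d" using b by (cases "block_defect I lam") auto
  have le: "defect I mu \<le> d" if "wsim I lam mu" for mu
  proof -
    have "enat (defect I mu) \<le> block_defect I lam" unfolding block_defect_def
      by (rule SUP_upper) (use that in simp)
    thus ?thesis using d by simp
  qed
  obtain F where F: "finite F" "\<And>i j. i \<in> I \<Longrightarrow> j \<in> I \<Longrightarrow> i < j \<Longrightarrow> lam i = Vee \<Longrightarrow> lam j = Wedge \<Longrightarrow> i \<in> F \<or> j \<in> F"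
    using weight_pair[OF w] by blast
  have "{mu. wsub I mu lam} \<subseteq> {mu. wsub I mu lam \<and> defect I mu \<le> d}"
  proof
    fix mu assume "mu \<in> {mu. wsub I mu lam}"
    hence m: "wsub I mu lam" by simp
    have "defect I mu \<le> d" by (rule le[OF wsub_facts(1)[OF m]])
    thus "mu \<in> {mu. wsub I mu lam \<and> defect I mu \<le> d}" using m by simp
  qed
  thus ?thesis by (rule finite_subset[OF _ fin_bounded[OF w F]])
qed


lemma count_equal:
  assumes ws: "wsim I lam mu" and fL: "finite {i\<in>I. lam i = l}"
  shows "finite {i\<in>I. mu i = l} \<and> card {i\<in>I. mu i = l} = card {i\<in>I. lam i = l}"
proof -
  obtain S where S: "finite S" "S \<subseteq> I" "\<And>i. i \<notin> S \<Longrightarrow> mu i = lam i"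
    "\<And>T l. finite T \<Longrightarrow> S \<subseteq> T \<Longrightarrow> card {i\<in>T. mu i = l} = card {i\<in>T. lam i = l}"
    using wsim_count[OF ws] by blast
  let ?T = "S \<union> {i\<in>I. lam i = l}"
  have fT: "finite ?T" using S(1) fL by simp
  have e1: "{i\<in>?T. mu i = l} = {i\<in>I. mu i = l}"
  proof
    show "{i\<in>?T. mu i = l} \<subseteq> {i\<in>I. mu i = l}" using S(2) by blast
    show "{i\<in>I. mu i = l} \<subseteq> {i\<in>?T. mu i = l}"
    proof
      fix i assume i: "i \<in> {i\<in>I. mu i = l}"
      show "i \<in> {i\<in>?T. mu i = l}"
      proof (cases "i \<in> S")
        case False thus ?thesis using S(3)[OF False] i by simp
      qed (use i in simp)
    qed
  qed
  have e2: "{i\<in>?T. lam i = l} = {i\<in>I. lam i = l}" using S(2) by blast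
  have "finite {i\<in>I. mu i = l}" using e1 fT by (metis (no_types, lifting) finite_subset mem_Collect_eq subsetI)
  moreover have "card {i\<in>I. mu i = l} = card {i\<in>I. lam i = l}" using S(4)[OF fT, of l] e1 e2 by simp
  ultimately show ?thesis by blast
qed

lemma defect_le_lab:
  assumes w: "weight I mu" and f: "finite {i\<in>I. mu i = l}" and l: "l = Vee \<or> l = Wedge"
  shows "defect I mu \<le> card {i\<in>I. mu i = l}"
proof -
  let ?c = "under I mu"
  have v: "valid I ?c mu" by (rule valid_under[OF w])
  have cd: "cup_diagram I ?c" and o: "oriented I ?c mu" and d0: "cdeg ?c mu = 0" using v unfolding valid_def by auto
  let ?h = "\<lambda>p::int\<times>int. if l = Vee then fst p else snd p"
  have "inj_on ?h (fst ?c)"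
  proof (rule inj_onI)
    fix p q assume p: "p \<in> fst ?c" and q: "q \<in> fst ?c" and e: "?h p = ?h q"
    obtain a b where ab: "p = (a,b)" by fastforce
    obtain a' b' where ab': "q = (a',b')" by fastforce
    have pC: "(a,b) \<in> fst ?c" and qC: "(a',b') \<in> fst ?c" using p q ab ab' by auto
    have "a = a' \<or> a = b' \<or> b = a' \<or> b = b'" using e ab ab' by (auto split: if_splits)
    from cd_disj2[OF cd pC qC this] show "p = q" using ab ab' by simp
  qed
  moreover have "?h ` fst ?c \<subseteq> {i\<in>I. mu i = l}"
  proof
    fix x assume "x \<in> ?h ` fst ?c"
    then obtain p where p: "p \<in> fst ?c" "x = ?h p" by blast
    obtain a b where "p = (a,b)" by fastforce
    hence ab: "(a,b) \<in> fst ?c" "x = ?h (a,b)" using p by auto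
    show "x \<in> {i\<in>I. mu i = l}" using cd_in[OF cd ab(1)] deg0[OF cd o d0 ab(1)] ab(2) l by auto
  qed
  ultimately have "card (fst ?c) \<le> card {i\<in>I. mu i = l}" using card_inj_on_le f by blast
  thus ?thesis unfolding defect_def .
qed

lemma block_finite_lab:
  assumes w: "weight I lam" and f: "finite {i\<in>I. lam i = l}" and l: "l = Vee \<or> l = Wedge"
  shows "block_defect I lam < \<infinity>"
proof -
  have "block_defect I lam \<le> enat (card {i\<in>I. lam i = l})"
    unfolding block_defect_def
  proof (rule SUP_least)
    fix mu assume "mu \<in> {mu. wsim I lam mu}"
    hence ws: "wsim I lam mu" by simp
    note ce = count_equal[OF ws f]
    have "defect I mu \<le> card {i\<in>I. mu i = l}" by (rule defect_le_lab[OF wsim_weight(2)[OF ws] conjunct1[OF ce] l])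
    thus "enat (defect I mu) \<le> enat (card {i\<in>I. lam i = l})" using ce by simp
  qed
  thus ?thesis by (metis enat_ord_simps(4) infinity_ileE le_less_trans)
qed


lemma cd_intro:
  assumes "finite (fst c)" "\<And>a b. (a,b) \<in> fst c \<Longrightarrow> a \<in> I \<and> b \<in> I \<and> a < b"
    "\<And>p q. p \<in> fst c \<Longrightarrow> q \<in> fst c \<Longrightarrow> p \<noteq> q \<Longrightarrow> {fst p, snd p} \<inter> {fst q, snd q} = {}"
    "\<And>a b a' b'. (a,b) \<in> fst c \<Longrightarrow> (a',b') \<in> fst c \<Longrightarrow> \<not> (a < a' \<and> a' < b \<and> b < b')"
    "snd c \<subseteq> I" "snd c \<inter> cup_ends (fst c) = {}"
    "\<And>r a b. r \<in> snd c \<Longrightarrow> (a,b) \<in> fst c \<Longrightarrow> \<not> (a < r \<and> r < b)"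
  shows "cup_diagram I c"
  unfolding cup_diagram_def Let_def
  apply (intro conjI)
  using assms by auto

definition swp :: "int \<Rightarrow> int \<Rightarrow> int \<Rightarrow> int" where
  "swp w v i = (if i = w then v else if i = v then w else i)"

definition Inv :: "int set \<Rightarrow> (int \<Rightarrow> label) \<Rightarrow> (int \<Rightarrow> label) \<Rightarrow> bool" where
  "Inv I lam mu \<longleftrightarrow> wsub I mu lam \<and> (\<forall>r\<in>snd (under I mu). lam r = mu r)
     \<and> infinite {r\<in>snd (under I mu). mu r = Wedge} \<and> infinite {r\<in>snd (under I mu). mu r = Vee}"

lemma inv_step:
  assumes inv: "Inv I lam mu"
  shows "\<exists>mu'. Inv I lam mu' \<and> defect I mu' = Suc (defect I mu)"
proof -
  have m: "wsub I mu lam" and agr: "\<And>r. r \<in> snd (under I mu) \<Longrightarrow> lam r = mu r"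
    and iW: "infinite {r\<in>snd (under I mu). mu r = Wedge}" and iV: "infinite {r\<in>snd (under I mu). mu r = Vee}"
    using inv unfolding Inv_def by auto
  note f = wsub_facts[OF m]
  let ?c = "under I mu"
  let ?C = "fst ?c" and ?R = "snd ?c"
  have cd: "cup_diagram I ?c" and om: "oriented I ?c mu" and d0: "cdeg ?c mu = 0" using f(3) unfolding valid_def by auto
  have ol: "oriented I ?c lam" by (rule f(4))
  let ?RW = "{r\<in>?R. mu r = Wedge}" and ?RV = "{r\<in>?R. mu r = Vee}"
  have ordWV: "x < y" if "x \<in> ?RW" "y \<in> ?RV" for x y
  proof (rule ccontr)
    assume "\<not> x < y"
    moreover have "x \<noteq> y" using that by auto
    ultimately have "y < x" by simp
    thus False using or_ord[OF om, of y x] that by auto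
  qed
  obtain v0 where v0: "v0 \<in> ?RV" using iV not_finite_existsD by blast
  obtain w0 where w0: "w0 \<in> ?RW" using iW not_finite_existsD by blast
  let ?Wb = "{r\<in>?RW. w0 \<le> r}" and ?Vb = "{r\<in>?RV. r \<le> v0}"
  have fWb: "finite ?Wb" by (rule finite_subset[of _ "{w0..v0}"]) (use ordWV[OF _ v0] in \<open>auto simp: less_imp_le\<close>)
  have fVb: "finite ?Vb" by (rule finite_subset[of _ "{w0..v0}"]) (use ordWV[OF w0] in \<open>auto simp: less_imp_le\<close>)
  define w where "w = Max ?Wb"
  define v where "v = Min ?Vb"
  have wW: "w \<in> ?Wb" unfolding w_def by (rule Max_in[OF fWb]) (use w0 in auto)
  have vV: "v \<in> ?Vb" unfolding v_def by (rule Min_in[OF fVb]) (use v0 in auto)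
  have wmax: "r \<le> w" if "r \<in> ?RW" for r
  proof (cases "w0 \<le> r")
    case True thus ?thesis unfolding w_def using Max_ge[OF fWb] that by auto
  next
    case False thus ?thesis using wW by auto
  qed
  have vmin: "v \<le> r" if "r \<in> ?RV" for r
  proof (cases "r \<le> v0")
    case True thus ?thesis unfolding v_def using Min_le[OF fVb] that by auto
  next
    case False thus ?thesis using vV by auto
  qed
  have wR: "w \<in> ?R" "mu w = Wedge" using wW by auto
  have vR: "v \<in> ?R" "mu v = Vee" using vV by auto
  have wv: "w < v" using ordWV wW vV by auto
  have wI: "w \<in> I" "v \<in> I" using cd_RI[OF cd] wR vR by auto
  have wnE: "w \<notin> cup_ends ?C" "v \<notin> cup_ends ?C" using cd_Rends[OF cd] wR vR by auto
  define mu' where "mu' = mu(w := Vee, v := Wedge)"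
  have mu'w: "mu' w = Vee" "mu' v = Wedge" unfolding mu'_def using wv by auto
  have mu'o: "mu' i = mu i" if "i \<noteq> w" "i \<noteq> v" for i unfolding mu'_def using that by auto
  define c' where "c' = (insert (w,v) ?C, ?R - {w,v})"
  have c'f: "fst c' = insert (w,v) ?C" "snd c' = ?R - {w,v}" unfolding c'_def by auto
  have Cne: "a \<noteq> w \<and> a \<noteq> v \<and> b \<noteq> w \<and> b \<noteq> v" if "(a,b) \<in> ?C" for a b
    using wnE that unfolding mem_ends by blast
  have inR: "\<not> (w < r \<and> r < v)" if "r \<in> ?R" for r
  proof
    assume r: "w < r \<and> r < v"
    have "mu r = Vee \<or> mu r = Wedge" by (rule or_ray[OF om that])
    thus False
    proof
      assume "mu r = Vee" thus False using vmin[of r] that r by auto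
    next
      assume "mu r = Wedge" thus False using wmax[of r] that r by auto
    qed
  qed
  have e2: "cup_ends (insert (w,v) ?C) = insert w (insert v (cup_ends ?C))" unfolding cup_ends_def by auto
  have cd': "cup_diagram I c'"
  proof (rule cd_intro)
    show "finite (fst c')" using cd_fin[OF cd] unfolding c'f by simp
    show "a \<in> I \<and> b \<in> I \<and> a < b" if "(a,b) \<in> fst c'" for a b
      using that cd_in[OF cd] wI wv unfolding c'f by auto
    show "{fst p, snd p} \<inter> {fst q, snd q} = {}" if "p \<in> fst c'" "q \<in> fst c'" "p \<noteq> q" for p q
    proof -
      obtain a b where p: "p = (a,b)" by fastforce
      obtain a' b' where q: "q = (a',b')" by fastforce
      show ?thesis
      proof (cases "p = (w,v)")
        case True
        hence "q \<in> ?C" using that c'f by auto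
        thus ?thesis using Cne[of a' b'] True q by auto
      next
        case False
        hence pC: "p \<in> ?C" using that c'f by auto
        show ?thesis
        proof (cases "q = (w,v)")
          case True thus ?thesis using Cne[of a b] pC p by auto
        next
          case False
          hence "q \<in> ?C" using that c'f by auto
          thus ?thesis using cd_disj[OF cd pC _ that(3)] by blast
        qed
      qed
    qed
    show "\<not> (a < a' \<and> a' < b \<and> b < b')" if abab: "(a,b) \<in> fst c'" "(a',b') \<in> fst c'" for a b a' b'
    proof -
      consider "(a,b) = (w,v)" "(a',b') = (w,v)" | "(a,b) = (w,v)" "(a',b') \<in> ?C" | "(a,b) \<in> ?C" "(a',b') = (w,v)"
        | "(a,b) \<in> ?C" "(a',b') \<in> ?C" using abab c'f by auto
      thus ?thesis
      proof cases
        case 1 thus ?thesis by auto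
      next
        case 2 thus ?thesis using cd_Rin[OF cd vR(1) 2(2)] by auto
      next
        case 3 thus ?thesis using cd_Rin[OF cd wR(1) 3(1)] by auto
      next
        case 4 thus ?thesis using cd_nc[OF cd 4] by auto
      qed
    qed
    show "snd c' \<subseteq> I" using cd_RI[OF cd] c'f by auto
    show "snd c' \<inter> cup_ends (fst c') = {}" using cd_Rends[OF cd] unfolding c'f e2 by auto
    show "\<not> (a < r \<and> r < b)" if rab: "r \<in> snd c'" "(a,b) \<in> fst c'" for r a b
    proof -
      have rR: "r \<in> ?R" using rab c'f by auto
      consider "(a,b) = (w,v)" | "(a,b) \<in> ?C" using rab c'f by auto
      thus ?thesis
      proof cases
        case 1 thus ?thesis using inR[OF rR] by auto
      next
        case 2 thus ?thesis using cd_Rin[OF cd rR 2] by auto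
      qed
    qed
  qed
  have om': "oriented I c' mu'"
  proof (rule oriented_intro)
    fix i assume i: "i \<in> I" "i \<notin> cup_ends (fst c')" "i \<notin> snd c'"
    hence "i \<noteq> w" "i \<noteq> v" "i \<notin> cup_ends ?C" "i \<notin> ?R" unfolding c'f e2 by auto
    thus "mu' i \<in> {Circ, Cross}" using or_free[OF om i(1)] mu'o by auto
  next
    fix a b assume ab: "(a,b) \<in> fst c'"
    consider "(a,b) = (w,v)" | "(a,b) \<in> ?C" using ab c'f by auto
    thus "(mu' a = Vee \<and> mu' b = Wedge) \<or> (mu' a = Wedge \<and> mu' b = Vee)"
    proof cases
      case 1 thus ?thesis using mu'w by auto
    next
      case 2 thus ?thesis using or_cup[OF om 2] Cne[OF 2] mu'o by auto
    qed
  next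
    fix r assume "r \<in> snd c'"
    hence "r \<in> ?R" "r \<noteq> w" "r \<noteq> v" using c'f by auto
    thus "mu' r \<in> {Vee, Wedge}" using or_ray[OF om] mu'o by auto
  next
    fix r1 r2 assume r: "r1 \<in> snd c'" "r2 \<in> snd c'" "r1 < r2"
    hence "r1 \<in> ?R" "r2 \<in> ?R" "r1 \<noteq> w" "r1 \<noteq> v" "r2 \<noteq> w" "r2 \<noteq> v" using c'f by auto
    thus "\<not> (mu' r1 = Vee \<and> mu' r2 = Wedge)" using or_ord[OF om] r(3) mu'o by auto
  qed
  have d0': "cdeg c' mu' = 0"
  proof -
    have "{(a,b) \<in> fst c'. mu' a = Wedge} = {}"
    proof (rule equals0I)
      fix p assume "p \<in> {(a,b) \<in> fst c'. mu' a = Wedge}"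
      then obtain a b where ab: "p = (a,b)" "(a,b) \<in> fst c'" "mu' a = Wedge" by auto
      consider "(a,b) = (w,v)" | "(a,b) \<in> ?C" using ab c'f by auto
      thus False
      proof cases
        case 1 thus False using mu'w ab by auto
      next
        case 2 thus False using deg0[OF cd om d0 2] Cne[OF 2] mu'o ab by auto
      qed
    qed
    hence "card {(a,b) \<in> fst c'. mu' a = Wedge} = 0" by (simp only: card.empty)
    thus ?thesis unfolding cdeg_def .
  qed
  have wmu: "weight I mu" by (rule f(2))
  have wmu': "weight I mu'" by (rule weight_change[OF wmu, of "{w,v}"]) (auto simp: mu'_def)
  have u': "under I mu' = c'" by (rule under_eq[OF wmu']) (use cd' om' d0' in \<open>simp add: valid_def\<close>)
  have ws1: "wsim I mu mu'"
  proof (rule wsim_intro[OF wmu wmu'])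
    have ss: "swp w v (swp w v i) = i" for i unfolding swp_def by auto
    show "bij (swp w v)" by (rule o_bij[of "swp w v"]) (use ss in auto)
    have "{i. swp w v i \<noteq> i} \<subseteq> {w,v}" unfolding swp_def by auto
    thus "finite {i. swp w v i \<noteq> i}" by (rule finite_subset) simp
    show "i \<in> I \<and> mu i \<in> {Vee, Wedge}" if "swp w v i \<noteq> i" for i
    proof -
      have "i = w \<or> i = v" using that unfolding swp_def by (auto split: if_splits)
      thus ?thesis using wI wR vR by auto
    qed
    show "mu' i = mu (swp w v i)" for i unfolding mu'_def swp_def using wR vR wv by auto
  qed
  have wsub': "wsub I mu' lam"
  proof -
    have "wsim I mu' lam" using wsim_trans[OF wsim_sym[OF ws1] wsim_sym[OF f(1)]] .
    moreover have "oriented I c' lam"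
    proof (rule oriented_intro)
      fix i assume i: "i \<in> I" "i \<notin> cup_ends (fst c')" "i \<notin> snd c'"
      hence "i \<notin> cup_ends ?C" "i \<notin> ?R" unfolding c'f e2 by auto
      thus "lam i \<in> {Circ, Cross}" using or_free[OF ol i(1)] by auto
    next
      fix a b assume ab: "(a,b) \<in> fst c'"
      consider "(a,b) = (w,v)" | "(a,b) \<in> ?C" using ab c'f by auto
      thus "(lam a = Vee \<and> lam b = Wedge) \<or> (lam a = Wedge \<and> lam b = Vee)"
      proof cases
        case 1 thus ?thesis using agr[OF wR(1)] agr[OF vR(1)] wR vR by auto
      next
        case 2 thus ?thesis using or_cup[OF ol 2] by auto
      qed
    next
      fix r assume "r \<in> snd c'"
      hence "r \<in> ?R" using c'f by auto
      thus "lam r \<in> {Vee, Wedge}" using or_ray[OF ol] by auto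
    next
      fix r1 r2 assume r: "r1 \<in> snd c'" "r2 \<in> snd c'" "r1 < r2"
      hence "r1 \<in> ?R" "r2 \<in> ?R" using c'f by auto
      thus "\<not> (lam r1 = Vee \<and> lam r2 = Wedge)" using or_ord[OF ol] r(3) by auto
    qed
    ultimately show ?thesis unfolding wsub_def u' by simp
  qed
  have agr': "\<forall>r\<in>snd (under I mu'). lam r = mu' r"
  proof
    fix r assume "r \<in> snd (under I mu')"
    hence "r \<in> ?R" "r \<noteq> w" "r \<noteq> v" using u' c'f by auto
    thus "lam r = mu' r" using agr mu'o by auto
  qed
  have iW': "infinite {r\<in>snd (under I mu'). mu' r = Wedge}"
  proof
    assume fin: "finite {r\<in>snd (under I mu'). mu' r = Wedge}"
    have "?RW - {w,v} \<subseteq> {r\<in>snd (under I mu'). mu' r = Wedge}" using u' c'f mu'o by auto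
    hence "finite (?RW - {w,v})" using fin finite_subset by blast
    thus False using iW by simp
  qed
  have iV': "infinite {r\<in>snd (under I mu'). mu' r = Vee}"
  proof
    assume fin: "finite {r\<in>snd (under I mu'). mu' r = Vee}"
    have "?RV - {w,v} \<subseteq> {r\<in>snd (under I mu'). mu' r = Vee}" using u' c'f mu'o by auto
    hence "finite (?RV - {w,v})" using fin finite_subset by blast
    thus False using iV by simp
  qed
  have "defect I mu' = card (insert (w,v) ?C)" unfolding defect_def u' c'f ..
  also have "\<dots> = Suc (card ?C)"
  proof (rule card_insert_disjoint)
    show "finite ?C" by (rule cd_fin[OF cd])
    show "(w,v) \<notin> ?C" using wnE unfolding mem_ends by blast
  qed
  finally have "defect I mu' = Suc (defect I mu)" unfolding defect_def .
  moreover have "Inv I lam mu'" unfolding Inv_def using wsub' agr' iW' iV' by blast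
  ultimately show ?thesis by blast
qed


lemma part2b:
  assumes w: "weight I lam" and fin: "finite {mu. wsub I mu lam}"
  shows "block_defect I lam < \<infinity>"
proof (rule ccontr)
  assume nb: "\<not> block_defect I lam < \<infinity>"
  have iV: "infinite {i\<in>I. lam i = Vee}"
  proof
    assume "finite {i\<in>I. lam i = Vee}"
    from block_finite_lab[OF w this] nb show False by simp
  qed
  have iW: "infinite {i\<in>I. lam i = Wedge}"
  proof
    assume "finite {i\<in>I. lam i = Wedge}"
    from block_finite_lab[OF w this] nb show False by simp
  qed
  let ?c = "under I lam"
  have v: "valid I ?c lam" by (rule valid_under[OF w])
  have cd: "cup_diagram I ?c" and o: "oriented I ?c lam" using v unfolding valid_def by auto
  have fE: "finite (cup_ends (fst ?c))" by (rule finite_ends[OF cd_fin[OF cd]])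
  have R: "snd ?c = PP I lam - cup_ends (fst ?c)" by (rule valid_R[OF v])
  have inf_l: "infinite {r\<in>snd ?c. lam r = l}" if il: "infinite {i\<in>I. lam i = l}" and l: "l = Vee \<or> l = Wedge" for l
  proof
    assume fr: "finite {r\<in>snd ?c. lam r = l}"
    have "{i\<in>I. lam i = l} - cup_ends (fst ?c) \<subseteq> {r\<in>snd ?c. lam r = l}" using R l unfolding PP_def by auto
    hence "finite ({i\<in>I. lam i = l} - cup_ends (fst ?c))" using fr finite_subset by blast
    thus False using il fE by simp
  qed
  have i1: "infinite {r\<in>snd ?c. lam r = Wedge}" by (rule inf_l[OF iW]) simp
  have i2: "infinite {r\<in>snd ?c. lam r = Vee}" by (rule inf_l[OF iV]) simp
  have ws0: "wsub I lam lam" unfolding wsub_def using wsim_refl[OF w] o by (rule conjI)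
  have inv0: "Inv I lam lam"
    unfolding Inv_def by (intro conjI ws0 i1 i2 ballI refl)
  have all: "\<exists>mu. Inv I lam mu \<and> defect I mu = defect I lam + k" for k
  proof (induction k)
    case 0 have "Inv I lam lam \<and> defect I lam = defect I lam + 0" using inv0 by simp
    thus ?case by blast
  next
    case (Suc k)
    then obtain mu where mu: "Inv I lam mu" "defect I mu = defect I lam + k" by blast
    obtain mu' where "Inv I lam mu'" "defect I mu' = Suc (defect I mu)" using inv_step[OF mu(1)] by blast
    hence "Inv I lam mu' \<and> defect I mu' = defect I lam + Suc k" using mu(2) by simp
    thus ?case by blast
  qed
  have "finite (defect I ` {mu. wsub I mu lam})" using fin by (rule finite_imageI)
  then obtain B where B: "\<forall>x\<in>defect I ` {mu. wsub I mu lam}. x \<le> B"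
    unfolding finite_nat_set_iff_bounded_le by blast
  obtain mu where mu: "Inv I lam mu" "defect I mu = defect I lam + Suc B" using all by blast
  have "wsub I mu lam" using mu(1) unfolding Inv_def by simp
  hence "defect I mu \<in> defect I ` {mu. wsub I mu lam}" by simp
  hence "defect I mu \<le> B" using B by blast
  thus False using mu(2) by simp
qed

theorem lemma2p4:
  fixes I :: "int set" and lam :: "int \<Rightarrow> label"
  assumes "number_line I" and "weight I lam"
  shows "(finite {mu. wsub I lam mu} \<and> card {mu. wsub I lam mu} = 2 ^ defect I lam)
       \<and> (finite {mu. wsub I mu lam} \<longleftrightarrow> block_defect I lam < \<infinity>)
       \<and> (\<forall>j::int. finite {mu. wsub I mu lam \<and> int (cdeg (under I mu) lam) = j})"
proof (intro conjI allI iffI)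
  show "finite {mu. wsub I lam mu}" using part1[OF assms(2)] by simp
  show "card {mu. wsub I lam mu} = 2 ^ defect I lam" using part1[OF assms(2)] by simp
  show "block_defect I lam < \<infinity>" if "finite {mu. wsub I mu lam}" using part2b[OF assms(2) that] .
  show "finite {mu. wsub I mu lam}" if "block_defect I lam < \<infinity>" using part2a[OF assms(2) that] .
  show "finite {mu. wsub I mu lam \<and> int (cdeg (under I mu) lam) = j}" for j using part3[OF assms(2)] .
qed

end
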